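(* Assume (A1), (A2), (A5) and (A6). Let $\psi(H):=1$ for all $H$. Then $\sigma_\psi^2>0$, i.e. $\mathbb E^\circ|\mathcal T|+\frac2\mu(\mathbb E^\circ e(\mathcal T))^2-\sum_{k\ge0}\frac1{p_k}(\mathbb E^\circ n_k(\mathcal T))^2>0$.
   Context: Setting: for each $n$ a degree sequence $(d_1,\dots,d_n)$ with $n_k:=|\{i:d_i=k\}|$ and $D_n$ with $P(D_n=k)=n_k/n$; (A1) there is a probability distribution $(p_k)_{k\ge0}$ with $n_k/n\to p_k$ for all $k$ and $\mu:=\sum_kkp_k\in(0,\infty)$, $D$ with $P(D=k)=p_k$; (A2) $E D_n\to\mu$; (A5) $ED(D-2)>0$; (A6) $p_1>0$ and $p_0+p_1<1$. $\mathcal T$ is the Galton–Watson tree whose root has offspring distribution $D$ and other vertices offspring distribution $\hat D-1$, $P(\hat D=k)=kp_k/\mu$, regarded as an unlabelled unrooted tree; $|T|$, $e(T)$, $n_k(T)$ are numbers of vertices, edges and vertices of degree $k$. $\mathbb E^\circ g(\mathcal T):=E(g(\mathcal T);|\mathcal T|<\infty)$; $\sigma_\psi^2:=\mathbb E^\circ(|\mathcal T|\psi(\mathcal T)^2)+\frac2\mu(\mathbb E^\circ(e(\mathcal T)\psi(\mathcal T)))^2-\sum_{k\ge0}\frac1{p_k}(\mathbb E^\circ(n_k(\mathcal T)\psi(\mathcal T)))^2$ with $0/0=0$. *)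

theory Defs
  imports "HOL-Analysis.Analysis"
begin

text \<open>The Galton--Watson tree restricted to the
event that it is finite is a random finite plane tree; the law of a specific
plane tree is the usual product formula. All functionals used below
(number of vertices, edges, vertices of a given degree in the unrooted tree)
are invariant under reordering and rerooting, so they are functionals of the
unlabelled unrooted tree.\<close>

datatype ptree = Node "ptree list"

definition mu :: "(nat \<Rightarrow> real) \<Rightarrow> real" where
  "mu p = (\<Sum>k. real k * p k)"

text \<open>Offspring distribution of non-root vertices: law of \<open>\<hat>D - 1\<close>.\<close>
definition qoff :: "(nat \<Rightarrow> real) \<Rightarrow> nat \<Rightarrow> real" where
  "qoff p j = real (j + 1) * p (j + 1) / mu p"

fun sub_w :: "(nat \<Rightarrow> real) \<Rightarrow> ptree \<Rightarrow> real" where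
  "sub_w p (Node ts) = qoff p (length ts) * prod_list (map (sub_w p) ts)"

fun gw_prob :: "(nat \<Rightarrow> real) \<Rightarrow> ptree \<Rightarrow> real" where
  "gw_prob p (Node ts) = p (length ts) * prod_list (map (sub_w p) ts)"

fun num_vertices :: "ptree \<Rightarrow> nat" where
  "num_vertices (Node ts) = 1 + sum_list (map num_vertices ts)"

fun num_edges :: "ptree \<Rightarrow> nat" where
  "num_edges (Node ts) = length ts + sum_list (map num_edges ts)"

text \<open>Number of non-root vertices of (unrooted) degree k: degree = children + 1.\<close>
fun count_sub :: "nat \<Rightarrow> ptree \<Rightarrow> nat" where
  "count_sub k (Node ts) = (if length ts + 1 = k then 1 else 0) + sum_list (map (count_sub k) ts)"

text \<open>Number of vertices of degree k; the root has degree = number of children.\<close>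
fun num_deg :: "nat \<Rightarrow> ptree \<Rightarrow> nat" where
  "num_deg k (Node ts) = (if length ts = k then 1 else 0) + sum_list (map (count_sub k) ts)"

text \<open>\<open>E\<degree> g(T) = E(g(T); |T| < \<infinity>)\<close>\<close>
definition Eo :: "(nat \<Rightarrow> real) \<Rightarrow> (ptree \<Rightarrow> real) \<Rightarrow> real" where
  "Eo p g = infsum (\<lambda>t. gw_prob p t * g t) UNIV"

definition sigma_sq :: "(nat \<Rightarrow> real) \<Rightarrow> (ptree \<Rightarrow> real) \<Rightarrow> real" where
  "sigma_sq p \<psi> =
     Eo p (\<lambda>t. real (num_vertices t) * (\<psi> t)\<^sup>2)
     + 2 / mu p * (Eo p (\<lambda>t. real (num_edges t) * \<psi> t))\<^sup>2
     - (\<Sum>k. 1 / p k * (Eo p (\<lambda>t. real (num_deg k t) * \<psi> t))\<^sup>2)"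

end

theory Submission
  imports Defs
begin

lemma has_sum_times_nonneg:
  fixes f :: "'a \<Rightarrow> real" and g :: "'b \<Rightarrow> real"
  assumes f: "(f has_sum a) A" and g: "(g has_sum b) B"
    and fnn: "\<And>x. x\<in>A \<Longrightarrow> f x \<ge> 0" and gnn: "\<And>y. y\<in>B \<Longrightarrow> g y \<ge> 0"
  shows "((\<lambda>(x,y). f x * g y) has_sum (a*b)) (A \<times> B)"
proof -
  have inner: "((\<lambda>y. (\<lambda>(x,y). f x * g y) (x,y)) has_sum f x * b) B" if "x \<in> A" for x
    using has_sum_cmult_right[OF g, of "f x"] by simp
  have outer: "((\<lambda>x. f x * b) has_sum a * b) A"
    using has_sum_cmult_left[OF f] .
  have summ: "(\<lambda>(x,y). f x * g y) summable_on Sigma A (\<lambda>_. B)"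
    by (rule summable_on_SigmaI[OF inner]) (use outer has_sum_imp_summable fnn gnn in auto)
  show ?thesis
    using has_sum_SigmaI[OF inner outer summ] by simp
qed

definition lists_len :: "nat \<Rightarrow> 'a set \<Rightarrow> 'a list set" where
  "lists_len j A = {ts. length ts = j \<and> set ts \<subseteq> A}"

lemma lists_len_0: "lists_len 0 A = {[]}"
  by (auto simp: lists_len_def)

lemma lists_len_Suc: "lists_len (Suc j) A = (\<lambda>(t,ts). t # ts) ` (A \<times> lists_len j A)"
  unfolding lists_len_def
  by (auto simp: length_Suc_conv image_iff)

lemma inj_on_Cons_pair: "inj_on (\<lambda>(t,ts). t # ts) X"
  by (auto simp: inj_on_def)

lemma has_sum_lists_prod:
  fixes w :: "'a \<Rightarrow> real"
  assumes w: "(w has_sum s) A" and wnn: "\<And>x. x\<in>A \<Longrightarrow> w x \<ge> 0"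
  shows "((\<lambda>ts. prod_list (map w ts)) has_sum s ^ j) (lists_len j A)"
proof (induction j)
  case 0
  then show ?case by (simp add: lists_len_0 has_sum_finite_iff)
next
  case (Suc j)
  have nn: "prod_list (map w ts) \<ge> 0" if "ts \<in> lists_len j A" for ts
    using that wnn by (fastforce simp: lists_len_def intro!: prod_list_nonneg)
  have "((\<lambda>(t,ts). w t * prod_list (map w ts)) has_sum (s * s ^ j)) (A \<times> lists_len j A)"
    by (rule has_sum_times_nonneg[OF w Suc wnn nn])
  then have "(((\<lambda>ts. prod_list (map w ts)) \<circ> (\<lambda>(t,ts). t # ts)) has_sum (s ^ Suc j)) (A \<times> lists_len j A)"
    by (simp add: o_def case_prod_unfold)
  then show ?case
    by (simp add: lists_len_Suc has_sum_reindex[OF inj_on_Cons_pair])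
qed

lemma has_sum_lists_prod_sum:
  fixes w g :: "'a \<Rightarrow> real"
  assumes w: "(w has_sum s) A" and wnn: "\<And>x. x\<in>A \<Longrightarrow> w x \<ge> 0"
    and wg: "((\<lambda>x. w x * g x) has_sum c) A" and gnn: "\<And>x. x\<in>A \<Longrightarrow> g x \<ge> 0"
  shows "((\<lambda>ts. prod_list (map w ts) * sum_list (map g ts)) has_sum (real j * s ^ (j - 1) * c)) (lists_len j A)"
proof (induction j)
  case 0
  then show ?case by (simp add: lists_len_0 has_sum_finite_iff)
next
  case (Suc j)
  have nn: "prod_list (map w ts) \<ge> 0" if "ts \<in> lists_len j A" for ts
    using that wnn by (fastforce simp: lists_len_def intro!: prod_list_nonneg)
  have nn2: "prod_list (map w ts) * sum_list (map g ts) \<ge> 0" if "ts \<in> lists_len j A" for ts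
    using that gnn nn[OF that] by (fastforce simp: lists_len_def intro!: mult_nonneg_nonneg sum_list_nonneg)
  have wgnn: "w x * g x \<ge> 0" if "x \<in> A" for x using wnn gnn that by simp
  have h1: "((\<lambda>(t,ts). (w t * g t) * prod_list (map w ts)) has_sum (c * s ^ j)) (A \<times> lists_len j A)"
    by (rule has_sum_times_nonneg[OF wg has_sum_lists_prod[OF w wnn] wgnn nn])
  have h2: "((\<lambda>(t,ts). w t * (prod_list (map w ts) * sum_list (map g ts))) has_sum (s * (real j * s ^ (j - 1) * c))) (A \<times> lists_len j A)"
    by (rule has_sum_times_nonneg[OF w Suc wnn nn2])
  have eq: "c * s ^ j + s * (real j * s ^ (j - 1) * c) = real (Suc j) * s ^ (Suc j - 1) * c"
    by (cases j) (auto simp: algebra_simps)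
  have h3: "((\<lambda>x. (\<lambda>(t,ts). (w t * g t) * prod_list (map w ts)) x + (\<lambda>(t,ts). w t * (prod_list (map w ts) * sum_list (map g ts))) x)
      has_sum (real (Suc j) * s ^ (Suc j - 1) * c)) (A \<times> lists_len j A)"
    using has_sum_add[OF h1 h2] by (simp only: eq)
  have "(((\<lambda>ts. prod_list (map w ts) * sum_list (map g ts)) \<circ> (\<lambda>(t,ts). t # ts)) has_sum (real (Suc j) * s ^ (Suc j - 1) * c)) (A \<times> lists_len j A)"
    using h3 by (rule has_sum_cong[THEN iffD1, rotated]) (auto simp: algebra_simps)
  then show ?case
    by (simp add: lists_len_Suc has_sum_reindex[OF inj_on_Cons_pair])
qed

fun kids :: "ptree \<Rightarrow> ptree list" where "kids (Node ts) = ts"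

definition NodeSet :: "ptree set \<Rightarrow> ptree set" where
  "NodeSet A = {Node ts | ts. set ts \<subseteq> A}"

lemma NodeSet_eq: "NodeSet A = (\<lambda>(j,ts). Node ts) ` (SIGMA j:UNIV. lists_len j A)"
  unfolding NodeSet_def lists_len_def by (auto simp: image_iff)

lemma inj_NodeSet: "inj_on (\<lambda>(j,ts). Node ts) (SIGMA j:UNIV. lists_len j A)"
  unfolding lists_len_def by (auto simp: inj_on_def)

lemma has_sum_decomp:
  fixes w g :: "ptree \<Rightarrow> real" and r e :: "nat \<Rightarrow> real"
  assumes w: "(w has_sum s) A" and wnn: "\<And>x. x\<in>A \<Longrightarrow> w x \<ge> 0"
    and wg: "((\<lambda>x. w x * g x) has_sum c) A" and gnn: "\<And>x. x\<in>A \<Longrightarrow> g x \<ge> 0"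
    and rnn: "\<And>j. r j \<ge> 0" and enn: "\<And>j. e j \<ge> 0"
    and ser: "(\<lambda>j. r j * (s ^ j * e j + real j * s ^ (j - 1) * c)) sums S"
  shows "((\<lambda>t. r (length (kids t)) * prod_list (map w (kids t)) * (e (length (kids t)) + sum_list (map g (kids t))))
           has_sum S) (NodeSet A)"
proof -
  define F where "F = (\<lambda>(j::nat,ts). r j * prod_list (map w ts) * (e j + sum_list (map g ts)))"
  have s_nn: "s \<ge> 0" using w wnn by (rule has_sum_nonneg)
  have c_nn: "c \<ge> 0" using wg by (rule has_sum_nonneg) (use wnn gnn in auto)
  have Fnn: "F (j,ts) \<ge> 0" if "ts \<in> lists_len j A" for j ts
    using that wnn gnn rnn enn unfolding F_def lists_len_def
    by (auto intro!: mult_nonneg_nonneg add_nonneg_nonneg prod_list_nonneg sum_list_nonneg wnn gnn)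
  have inner: "((\<lambda>ts. F (j,ts)) has_sum r j * (s ^ j * e j + real j * s ^ (j - 1) * c)) (lists_len j A)" for j
  proof -
    have h1: "((\<lambda>ts. e j * prod_list (map w ts)) has_sum e j * s ^ j) (lists_len j A)"
      by (rule has_sum_cmult_right[OF has_sum_lists_prod[OF w wnn]])
    note h2 = has_sum_lists_prod_sum[OF w wnn wg gnn, of j]
    have "((\<lambda>ts. r j * (e j * prod_list (map w ts) + prod_list (map w ts) * sum_list (map g ts))) has_sum
           r j * (e j * s ^ j + real j * s ^ (j - 1) * c)) (lists_len j A)"
      by (rule has_sum_cmult_right[OF has_sum_add[OF h1 h2]])
    then show ?thesis
      by (simp add: F_def algebra_simps)
  qed
  have outer: "((\<lambda>j. r j * (s ^ j * e j + real j * s ^ (j - 1) * c)) has_sum S) UNIV"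
    by (rule sums_nonneg_imp_has_sum[OF ser]) (use rnn enn s_nn c_nn in auto)
  have summ: "F summable_on (SIGMA j:UNIV. lists_len j A)"
    by (rule summable_on_SigmaI[OF inner]) (use outer has_sum_imp_summable Fnn in auto)
  have "(F has_sum S) (SIGMA j:UNIV. lists_len j A)"
    by (rule has_sum_SigmaI[OF inner outer summ])
  then have "(((\<lambda>t. r (length (kids t)) * prod_list (map w (kids t)) * (e (length (kids t)) + sum_list (map g (kids t))))
      \<circ> (\<lambda>(j,ts). Node ts)) has_sum S) (SIGMA j:UNIV. lists_len j A)"
  proof -
    have "(((\<lambda>t. r (length (kids t)) * prod_list (map w (kids t)) * (e (length (kids t)) + sum_list (map g (kids t))))
      \<circ> (\<lambda>(j,ts). Node ts)) has_sum S) (SIGMA j:UNIV. lists_len j A) \<longleftrightarrow> (F has_sum S) (SIGMA j:UNIV. lists_len j A)"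
    proof (rule has_sum_cong)
      fix x assume "x \<in> (SIGMA j:UNIV. lists_len j A)"
      then obtain j ts where x: "x = (j,ts)" "length ts = j" by (cases x) (auto simp: lists_len_def)
      show "((\<lambda>t. r (length (kids t)) * prod_list (map w (kids t)) * (e (length (kids t)) + sum_list (map g (kids t))))
      \<circ> (\<lambda>(j,ts). Node ts)) x = F x"
        using x by (simp add: F_def)
    qed
    then show ?thesis using \<open>(F has_sum S) (SIGMA j:UNIV. lists_len j A)\<close> by simp
  qed
  then show ?thesis
    by (simp add: NodeSet_eq has_sum_reindex[OF inj_NodeSet])
qed

fun Hs :: "nat \<Rightarrow> ptree set" where
  "Hs 0 = {}"
| "Hs (Suc n) = NodeSet (Hs n)"

lemma NodeSet_mono: "A \<subseteq> B \<Longrightarrow> NodeSet A \<subseteq> NodeSet B"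
  unfolding NodeSet_def by blast

lemma Hs_Suc_mono: "Hs n \<subseteq> Hs (Suc n)"
  by (induction n) (auto intro: NodeSet_mono[THEN subsetD])

lemma Hs_mono: "m \<le> n \<Longrightarrow> Hs m \<subseteq> Hs n"
  using Hs_Suc_mono by (rule lift_Suc_mono_le)

lemma Hs_cover: "\<exists>n. t \<in> Hs n"
proof (induction t)
  case (Node ts)
  then have "\<forall>t\<in>set ts. \<exists>n. t \<in> Hs n" by simp
  then obtain f where f: "\<And>t. t \<in> set ts \<Longrightarrow> t \<in> Hs (f t)" by metis
  define n where "n = Max (insert 0 (f ` set ts))"
  have "t \<in> Hs n" if "t \<in> set ts" for t
    using f[OF that] Hs_mono[of "f t" n] that unfolding n_def by auto
  then have "Node ts \<in> Hs (Suc n)" by (auto simp: NodeSet_def)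
  then show ?case by blast
qed

lemma finite_in_Hs: "finite X \<Longrightarrow> \<exists>n. X \<subseteq> Hs n"
proof (induction X rule: finite_induct)
  case empty then show ?case by auto
next
  case (insert x F)
  then obtain n where n: "F \<subseteq> Hs n" by blast
  obtain m where m: "x \<in> Hs m" using Hs_cover by blast
  have "insert x F \<subseteq> Hs (max n m)"
    using n m Hs_mono[of n "max n m"] Hs_mono[of m "max n m"] by auto
  then show ?case by blast
qed

lemma NodeSet_UNIV: "NodeSet UNIV = UNIV"
proof -
  have "t \<in> NodeSet UNIV" for t by (cases t) (auto simp: NodeSet_def)
  then show ?thesis by auto
qed

lemma kids_Node_len: "t = Node (kids t)" by (cases t) auto

lemma term_le_suminf:
  fixes f :: "nat \<Rightarrow> real"
  assumes "summable f" "\<And>n. 0 \<le> f n" shows "f i \<le> suminf f"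
  using sum_le_suminf[OF assms(1), of "{i}"] assms(2) by auto

definition hq :: "(nat \<Rightarrow> real) \<Rightarrow> real \<Rightarrow> real" where
  "hq p s = (\<Sum>j. qoff p j * s ^ j)"

definition dq :: "(nat \<Rightarrow> real) \<Rightarrow> real \<Rightarrow> real" where
  "dq p s = (\<Sum>j. real j * qoff p j * s ^ (j - 1))"

lemma has_sum_subset_le:
  fixes f :: "'a \<Rightarrow> real"
  assumes "(f has_sum a) A" "(f has_sum b) B" "A \<subseteq> B" "\<And>x. x \<in> B \<Longrightarrow> f x \<ge> 0"
  shows "a \<le> b"
  by (rule has_sum_mono_neutral[OF assms(1,2)]) (use assms(3,4) in auto)

lemma finite_sum_le_has_sum:
  fixes f :: "'a \<Rightarrow> real"
  assumes "finite F" "F \<subseteq> B" "(f has_sum b) B" "\<And>x. x \<in> B \<Longrightarrow> f x \<ge> 0"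
  shows "sum f F \<le> b"
  using has_sum_subset_le[OF has_sum_finite[OF assms(1)] assms(3,2,4)] .

locale gwbase =
  fixes p :: "nat \<Rightarrow> real"
  assumes p_nonneg: "\<And>k. p k \<ge> 0"
    and p_sum: "p sums 1"
    and mu_fin: "summable (\<lambda>k. real k * p k)"
    and mu_pos: "mu p > 0"
begin

lemma mu_sums: "(\<lambda>k. real k * p k) sums mu p"
  using mu_fin unfolding mu_def by (rule summable_sums)

lemma p_le1: "p k \<le> 1"
  using term_le_suminf[of p k] p_sum p_nonneg sums_unique[OF p_sum] by (auto simp: sums_iff)

lemma q_nonneg: "qoff p j \<ge> 0"
  unfolding qoff_def using p_nonneg mu_pos by auto

lemma shifted_mu_sums: "(\<lambda>j. real (j+1) * p (j+1)) sums mu p"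
proof -
  have "(\<lambda>n. (\<lambda>k. real k * p k) (Suc n)) sums (mu p)"
    using mu_sums by (subst sums_Suc_iff) simp
  then show ?thesis by simp
qed

lemma q_sums: "qoff p sums 1"
proof -
  have "(\<lambda>j. real (j+1) * p (j+1) / mu p) sums (mu p / mu p)"
    by (rule sums_divide[OF shifted_mu_sums])
  then show ?thesis using mu_pos by (simp add: qoff_def[abs_def])
qed

lemma q_summable: "summable (qoff p)" using q_sums by (simp add: sums_iff)

lemma q_le1: "qoff p j \<le> 1"
  using term_le_suminf[OF q_summable, of j] q_nonneg sums_unique[OF q_sums] by auto

lemma w_nonneg: "sub_w p t \<ge> 0"
proof (induction t)
  case (Node ts)
  then show ?case using q_nonneg by (auto intro!: mult_nonneg_nonneg prod_list_nonneg)
qed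

lemma hq_summable: assumes "0 \<le> s" "s \<le> 1" shows "summable (\<lambda>j. qoff p j * s ^ j)"
proof (rule summable_comparison_test'[OF q_summable])
  fix n show "norm (qoff p n * s ^ n) \<le> qoff p n"
    using assms q_nonneg by (auto simp: abs_mult intro!: mult_left_le power_le_one)
qed

lemma hq_nonneg: assumes "0 \<le> s" "s \<le> 1" shows "0 \<le> hq p s"
  unfolding hq_def using assms by (intro suminf_nonneg hq_summable) (auto intro!: mult_nonneg_nonneg q_nonneg)

lemma hq_mono: assumes "0 \<le> s" "s \<le> t" "t \<le> 1" shows "hq p s \<le> hq p t"
  unfolding hq_def using assms
  by (intro suminf_le hq_summable) (auto intro!: mult_left_mono power_mono q_nonneg)

lemma hq_one: "hq p 1 = 1"
  unfolding hq_def using sums_unique[OF q_sums] by simp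

lemma w_rec:
  assumes w: "(sub_w p has_sum s) A" and s: "0 \<le> s" "s \<le> 1"
  shows "(sub_w p has_sum hq p s) (NodeSet A)"
proof -
  have ser: "(\<lambda>j. qoff p j * (s ^ j * 1 + real j * s ^ (j - 1) * 0)) sums hq p s"
    unfolding hq_def using hq_summable[OF s] by (simp add: summable_sums)
  have "((\<lambda>t. qoff p (length (kids t)) * prod_list (map (sub_w p) (kids t)) * (1 + sum_list (map (\<lambda>_. 0) (kids t))))
           has_sum hq p s) (NodeSet A)"
    by (rule has_sum_decomp[OF w _ _ _ q_nonneg _ ser]) (auto simp: w_nonneg)
  then show ?thesis
    by (rule has_sum_cong[THEN iffD1, rotated]) (auto simp: NodeSet_def)
qed

end

lemma aux_pow:
  fixes x :: real assumes "0 \<le> x" "x \<le> 1"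
  shows "real j * x ^ (j - 1) * (1 - x) \<le> 1 - x ^ j"
proof -
  have "(\<Sum>i<j. x ^ (j - 1)) \<le> (\<Sum>i<j. x ^ i)"
    by (rule sum_mono) (use assms in \<open>auto intro!: power_decreasing\<close>)
  then have "real j * x ^ (j - 1) \<le> (\<Sum>i<j. x ^ i)" by simp
  then have "real j * x ^ (j - 1) * (1 - x) \<le> (\<Sum>i<j. x ^ i) * (1 - x)"
    using assms by (intro mult_right_mono) auto
  also have "\<dots> = 1 - x ^ j" by (simp add: one_diff_power_eq mult.commute)
  finally show ?thesis .
qed

lemma aux_pow_strict:
  fixes x :: real assumes "0 \<le> x" "x < 1" "2 \<le> j"
  shows "real j * x ^ (j - 1) * (1 - x) < 1 - x ^ j"
proof -
  have "(\<Sum>i<j. x ^ (j - 1)) < (\<Sum>i<j. x ^ i)"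
  proof (rule sum_strict_mono_ex1)
    show "\<forall>i\<in>{..<j}. x ^ (j - 1) \<le> x ^ i" using assms by (auto intro!: power_decreasing)
    show "\<exists>i\<in>{..<j}. x ^ (j - 1) < x ^ i"
      using assms by (intro bexI[of _ 0]) (auto simp: power_less_one_iff)
  qed auto
  then have "real j * x ^ (j - 1) < (\<Sum>i<j. x ^ i)" by simp
  then have "real j * x ^ (j - 1) * (1 - x) < (\<Sum>i<j. x ^ i) * (1 - x)"
    using assms by (intro mult_strict_right_mono) auto
  also have "\<dots> = 1 - x ^ j" by (simp add: one_diff_power_eq mult.commute)
  finally show ?thesis .
qed

locale gwsup = gwbase +
  assumes p1: "p 1 > 0"
    and pK: "\<exists>K\<ge>3. p K > 0"
    and Jdq: "\<exists>J. 1 < (\<Sum>j<J. real j * qoff p j)"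
begin

lemma qbig: "\<exists>j\<ge>2. qoff p j > 0"
proof -
  obtain K where K: "K \<ge> 3" "p K > 0" using pK by blast
  then have "qoff p (K - 1) > 0" using mu_pos by (simp add: qoff_def)
  then show ?thesis using K by (intro exI[of _ "K - 1"]) auto
qed

lemma one_minus_hq: assumes "0 \<le> s" "s \<le> 1"
  shows "(\<lambda>j. qoff p j * (1 - s ^ j)) sums (1 - hq p s)"
proof -
  have "(\<lambda>j. qoff p j - qoff p j * s ^ j) sums (1 - hq p s)"
    unfolding hq_def by (intro sums_diff q_sums summable_sums hq_summable assms)
  then show ?thesis by (simp add: algebra_simps)
qed

lemma hq_less1: assumes "0 \<le> s" "s < 1" shows "hq p s < 1"
proof -
  obtain j where j: "j \<ge> 2" "qoff p j > 0" using qbig by blast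
  have "0 < (\<Sum>j. qoff p j * (1 - s ^ j))"
  proof (rule suminf_pos2)
    show "summable (\<lambda>j. qoff p j * (1 - s ^ j))" using one_minus_hq assms by (auto simp: sums_iff)
    show "0 \<le> qoff p n * (1 - s ^ n)" for n using assms q_nonneg by (auto intro!: mult_nonneg_nonneg power_le_one)
    show "0 < qoff p j * (1 - s ^ j)" using assms j by (auto intro!: mult_pos_pos simp: power_less_one_iff)
  qed
  then show ?thesis using sums_unique[OF one_minus_hq[OF assms(1) less_imp_le[OF assms(2)]]] by auto
qed

definition Fseq :: "nat \<Rightarrow> real" where "Fseq n = infsum (sub_w p) (Hs n)"

lemma Fseq_props:
  "(sub_w p has_sum (Fseq n)) (Hs n) \<and> 0 \<le> Fseq n \<and> Fseq n < 1 \<and> Fseq (Suc n) = hq p (Fseq n)"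
proof (induction n)
  case 0
  have h: "(sub_w p has_sum 0) (Hs 0)" by simp
  then have F0: "Fseq 0 = 0" unfolding Fseq_def by (rule infsumI)
  have "(sub_w p has_sum hq p 0) (Hs (Suc 0))" using w_rec[OF h] by simp
  then show ?case using F0 h by (auto simp: Fseq_def infsumI)
next
  case (Suc n)
  then have h: "(sub_w p has_sum (Fseq (Suc n))) (Hs (Suc n))"
    using w_rec[of "Hs n" "Fseq n"] by (auto simp: Fseq_def infsumI)
  have nn: "0 \<le> Fseq (Suc n)" using Suc hq_nonneg by auto
  have lt: "Fseq (Suc n) < 1" using Suc hq_less1 by auto
  have "(sub_w p has_sum hq p (Fseq (Suc n))) (Hs (Suc (Suc n)))"
    using w_rec[OF h nn] lt by simp
  then have "Fseq (Suc (Suc n)) = hq p (Fseq (Suc n))" unfolding Fseq_def by (rule infsumI)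
  then show ?case using h nn lt by auto
qed

lemma Fseq_has_sum: "(sub_w p has_sum (Fseq n)) (Hs n)" using Fseq_props by blast
lemma Fseq_nonneg: "0 \<le> Fseq n" using Fseq_props by blast
lemma Fseq_less1: "Fseq n < 1" using Fseq_props by blast
lemma Fseq_Suc: "Fseq (Suc n) = hq p (Fseq n)" using Fseq_props by blast

lemma Fseq_mono: "Fseq n \<le> Fseq (Suc n)"
  by (rule has_sum_subset_le[OF Fseq_has_sum Fseq_has_sum Hs_Suc_mono]) (simp add: w_nonneg)

lemma finite_sum_le_Fseq: assumes "finite X" "X \<subseteq> Hs n" shows "sum (sub_w p) X \<le> Fseq n"
  by (rule finite_sum_le_has_sum[OF assms Fseq_has_sum]) (simp add: w_nonneg)

lemma w_summable: "sub_w p summable_on UNIV"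
proof (rule nonneg_bdd_above_summable_on)
  show "bdd_above (sum (sub_w p) ` {F. F \<subseteq> UNIV \<and> finite F})"
  proof (rule bdd_aboveI2)
    fix F :: "ptree set" assume "F \<in> {F. F \<subseteq> UNIV \<and> finite F}"
    then have "finite F" by auto
    then obtain n where "F \<subseteq> Hs n" using finite_in_Hs by blast
    then show "sum (sub_w p) F \<le> 1" using finite_sum_le_Fseq[OF \<open>finite F\<close>] Fseq_less1[of n] by fastforce
  qed
qed (simp add: w_nonneg)

definition xi :: real where "xi = infsum (sub_w p) UNIV"

lemma xi_has_sum: "(sub_w p has_sum xi) UNIV"
  unfolding xi_def using w_summable by (rule has_sum_infsum)

lemma xi_approx: assumes "y < xi" shows "\<exists>n. y < Fseq n"
proof -
  obtain F where F: "finite F" "dist (sum (sub_w p) F) xi \<le> (xi - y) / 2"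
    using has_sum_finite_approximation[OF xi_has_sum, of "(xi - y)/2"] assms by auto
  obtain n where "F \<subseteq> Hs n" using finite_in_Hs[OF F(1)] by blast
  then have "sum (sub_w p) F \<le> Fseq n" using finite_sum_le_Fseq F(1) by blast
  moreover have "xi + y \<le> 2 * sum (sub_w p) F" using F(2) unfolding dist_real_def
    by (auto simp: abs_if split: if_splits)
  ultimately have "y < Fseq n" using assms by linarith
  then show ?thesis by blast
qed

lemma xi_le1: "xi \<le> 1"
proof (rule ccontr)
  assume "\<not> xi \<le> 1"
  then obtain n where "1 < Fseq n" using xi_approx[of 1] by auto
  then show False using Fseq_less1[of n] by simp
qed

lemma xi_nonneg: "0 \<le> xi"
  using xi_has_sum by (rule has_sum_nonneg) (simp add: w_nonneg)

lemma hq_xi: "hq p xi = xi"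
proof -
  have "(sub_w p has_sum hq p xi) UNIV"
    using w_rec[OF xi_has_sum xi_nonneg xi_le1] by (simp add: NodeSet_UNIV)
  then show ?thesis using xi_has_sum has_sum_unique by blast
qed

lemma xi_pos: "0 < xi"
proof -
  have "sum (sub_w p) {Node []} \<le> xi"
    by (rule finite_sum_le_has_sum[OF _ _ xi_has_sum]) (auto simp: w_nonneg)
  moreover have "sub_w p (Node []) > 0" using p1 mu_pos by (simp add: qoff_def)
  ultimately show ?thesis by simp
qed

end

context gwsup begin

lemma hq_below: "\<exists>s0<1. \<forall>s. s0 \<le> s \<longrightarrow> s < 1 \<longrightarrow> hq p s < s"
proof -
  obtain J where J: "1 < (\<Sum>j<J. real j * qoff p j)" using Jdq by blast
  define P1 where "P1 = (\<Sum>j<J. real j * qoff p j)"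
  define K where "K = (\<Sum>j<J. qoff p j * (\<Sum>i<j. real i))"
  have K_nn: "K \<ge> 0" unfolding K_def using q_nonneg by (auto intro!: sum_nonneg mult_nonneg_nonneg)
  define s0 where "s0 = max 0 (1 - (P1 - 1) / (K + 1))"
  have s0: "s0 < 1" using J K_nn unfolding s0_def P1_def by (auto simp: field_simps)
  have "hq p s < s" if s: "s0 \<le> s" "s < 1" for s
  proof -
    have s_nn: "0 \<le> s" using s unfolding s0_def by auto
    have "(\<Sum>j<J. qoff p j * (1 - s ^ j)) \<le> (\<Sum>j. qoff p j * (1 - s ^ j))"
      using one_minus_hq[OF s_nn less_imp_le[OF s(2)]] q_nonneg s_nn s
      by (intro sum_le_suminf) (auto simp: sums_iff intro!: mult_nonneg_nonneg power_le_one)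
    also have "\<dots> = 1 - hq p s"
      using sums_unique[OF one_minus_hq[OF s_nn less_imp_le[OF s(2)]]] by simp
    finally have A: "(\<Sum>j<J. qoff p j * (1 - s ^ j)) \<le> 1 - hq p s" .
    have B: "qoff p j * (1 - s ^ j) \<ge> (1 - s) * (qoff p j * real j - (1 - s) * (qoff p j * (\<Sum>i<j. real i)))" for j
    proof -
      have "(\<Sum>i<j. 1 - real i * (1 - s)) \<le> (\<Sum>i<j. s ^ i)"
      proof (rule sum_mono)
        fix i
        have "1 + real i * (s - 1) \<le> (1 + (s - 1)) ^ i"
          by (rule Bernoulli_inequality) (use s_nn in auto)
        then show "1 - real i * (1 - s) \<le> s ^ i" by (simp add: algebra_simps)
      qed
      moreover have "(\<Sum>i<j. 1 - real i * (1 - s)) = real j - (1 - s) * (\<Sum>i<j. real i)"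
        by (simp add: sum_subtractf sum_distrib_left mult.commute)
      ultimately have "real j - (1 - s) * (\<Sum>i<j. real i) \<le> (\<Sum>i<j. s ^ i)" by simp
      then have "qoff p j * (real j - (1 - s) * (\<Sum>i<j. real i)) \<le> qoff p j * (\<Sum>i<j. s ^ i)"
        using q_nonneg[of j] by (rule mult_left_mono)
      then have "(1 - s) * (qoff p j * (real j - (1 - s) * (\<Sum>i<j. real i))) \<le> (1 - s) * (qoff p j * (\<Sum>i<j. s ^ i))"
        by (rule mult_left_mono) (use s in auto)
      also have "\<dots> = qoff p j * (1 - s ^ j)" by (simp add: one_diff_power_eq)
      finally show ?thesis by (simp add: algebra_simps)
    qed
    have "(1 - s) * (P1 - (1 - s) * K) \<le> (\<Sum>j<J. qoff p j * (1 - s ^ j))"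
    proof -
      have "(\<Sum>j<J. (1 - s) * (qoff p j * real j - (1 - s) * (qoff p j * (\<Sum>i<j. real i))))
          = (\<Sum>j<J. (1 - s) * (qoff p j * real j)) - (\<Sum>j<J. (1 - s) * ((1 - s) * (qoff p j * (\<Sum>i<j. real i))))"
        by (simp only: right_diff_distrib sum_subtractf)
      also have "\<dots> = (1 - s) * (\<Sum>j<J. qoff p j * real j) - (1 - s) * ((1 - s) * (\<Sum>j<J. qoff p j * (\<Sum>i<j. real i)))"
        by (simp only: sum_distrib_left)
      also have "\<dots> = (1 - s) * (P1 - (1 - s) * K)"
        unfolding P1_def K_def by (simp add: mult.commute right_diff_distrib)
      finally have "(1 - s) * (P1 - (1 - s) * K) = (\<Sum>j<J. (1 - s) * (qoff p j * real j - (1 - s) * (qoff p j * (\<Sum>i<j. real i))))"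
        by simp
      also have "\<dots> \<le> (\<Sum>j<J. qoff p j * (1 - s ^ j))"
        by (rule sum_mono) (rule B)
      finally show ?thesis .
    qed
    with A have C: "(1 - s) * (P1 - (1 - s) * K) \<le> 1 - hq p s" by linarith
    have "(1 - s) * K < P1 - 1"
    proof -
      have "1 - s \<le> (P1 - 1) / (K + 1)" using s unfolding s0_def by auto
      then have "(1 - s) * (K + 1) \<le> P1 - 1" using K_nn by (simp add: field_simps)
      moreover have "1 - s > 0" using s by auto
      ultimately show ?thesis by (simp add: algebra_simps)
    qed
    then have "1 < P1 - (1 - s) * K" by linarith
    then have "(1 - s) * 1 < (1 - s) * (P1 - (1 - s) * K)" using s by (intro mult_strict_left_mono) auto
    then have D: "1 - s < (1 - s) * (P1 - (1 - s) * K)" by simp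
    define Z where "Z = (1 - s) * (P1 - (1 - s) * K)"
    from C D show ?thesis unfolding Z_def[symmetric] by linarith
  qed
  then show ?thesis using s0 by blast
qed

lemma xi_less1: "xi < 1"
proof (rule ccontr)
  assume "\<not> xi < 1"
  then have xi1: "xi = 1" using xi_le1 by auto
  obtain s0 where s0: "s0 < 1" "\<And>s. s0 \<le> s \<Longrightarrow> s < 1 \<Longrightarrow> hq p s < s" using hq_below by blast
  obtain n where n: "s0 < Fseq n" using xi_approx[of s0] s0 xi1 by auto
  have "hq p (Fseq n) < Fseq n" using s0(2)[of "Fseq n"] n Fseq_less1 by auto
  then have "Fseq (Suc n) < Fseq n" by (simp add: Fseq_Suc)
  then show False using Fseq_mono[of n] by simp
qed

definition a :: real where "a = dq p xi"

lemma dq_summable: assumes "0 \<le> s" "s \<le> xi" shows "summable (\<lambda>j. real j * qoff p j * s ^ (j - 1))"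
proof (rule summable_comparison_test'[of "\<lambda>j. qoff p j / (1 - xi)"])
  show "summable (\<lambda>j. qoff p j / (1 - xi))" by (intro summable_divide q_summable)
  fix n
  have x1: "0 \<le> xi" "xi \<le> 1" "xi < 1" using xi_nonneg xi_less1 by auto
  have "real n * qoff p n * s ^ (n - 1) \<le> real n * qoff p n * xi ^ (n - 1)"
    using assms q_nonneg by (auto intro!: mult_left_mono power_mono)
  also have "\<dots> \<le> qoff p n * (1 - xi ^ n) / (1 - xi)"
  proof -
    have "real n * xi ^ (n - 1) \<le> (1 - xi ^ n) / (1 - xi)"
      using aux_pow[OF x1(1,2), of n] x1 by (simp add: pos_le_divide_eq)
    then have "qoff p n * (real n * xi ^ (n - 1)) \<le> qoff p n * ((1 - xi ^ n) / (1 - xi))"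
      using q_nonneg by (rule mult_left_mono)
    then show ?thesis by (simp add: algebra_simps)
  qed
  also have "\<dots> \<le> qoff p n / (1 - xi)"
    using x1 q_nonneg[of n] by (intro divide_right_mono) (auto simp: mult_left_le)
  finally show "norm (real n * qoff p n * s ^ (n - 1)) \<le> qoff p n / (1 - xi)"
    using assms q_nonneg by simp
qed

lemma dq_sums: assumes "0 \<le> s" "s \<le> xi" shows "(\<lambda>j. real j * qoff p j * s ^ (j - 1)) sums dq p s"
  unfolding dq_def using dq_summable[OF assms] by (rule summable_sums)

lemma dq_mono: assumes "0 \<le> s" "s \<le> xi" shows "dq p s \<le> a"
proof -
  have "real j * qoff p j * s ^ (j - 1) \<le> real j * qoff p j * xi ^ (j - 1)" for j
    using assms q_nonneg[of j] by (intro mult_left_mono power_mono) auto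
  then show ?thesis
    unfolding a_def dq_def using assms xi_nonneg by (intro suminf_le dq_summable) auto
qed

lemma dq_nonneg: assumes "0 \<le> s" "s \<le> xi" shows "0 \<le> dq p s"
proof -
  have "0 \<le> real j * qoff p j * s ^ (j - 1)" for j
    using assms q_nonneg[of j] by simp
  then show ?thesis unfolding dq_def using assms by (intro suminf_nonneg dq_summable) auto
qed

lemma a_nonneg: "0 \<le> a" unfolding a_def using dq_nonneg[of xi] xi_nonneg by simp

lemma a_less1: "a < 1"
proof -
  have x1: "0 \<le> xi" "xi \<le> 1" "xi < 1" using xi_nonneg xi_less1 by auto
  obtain j0 where j0: "j0 \<ge> 2" "qoff p j0 > 0" using qbig by blast
  have "(\<lambda>j. real j * qoff p j * xi ^ (j - 1) * (1 - xi)) sums (a * (1 - xi))"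
    unfolding a_def by (intro sums_mult2 dq_sums x1) simp
  moreover have "(\<lambda>j. qoff p j * (1 - xi ^ j)) sums (1 - xi)"
    using one_minus_hq[OF x1(1,2)] hq_xi by simp
  ultimately have d: "(\<lambda>j. qoff p j * (1 - xi ^ j) - real j * qoff p j * xi ^ (j - 1) * (1 - xi)) sums (1 - xi - a * (1 - xi))"
    by (rule sums_diff[rotated])
  have "0 < 1 - xi - a * (1 - xi)"
    unfolding sums_unique[OF d]
  proof (rule suminf_pos2)
    show "summable (\<lambda>j. qoff p j * (1 - xi ^ j) - real j * qoff p j * xi ^ (j - 1) * (1 - xi))"
      using d by (simp add: sums_iff)
    show "0 \<le> qoff p n * (1 - xi ^ n) - real n * qoff p n * xi ^ (n - 1) * (1 - xi)" for n
      using mult_left_mono[OF aux_pow[OF x1(1,2), of n] q_nonneg[of n]] by (simp add: algebra_simps)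
    show "0 < qoff p j0 * (1 - xi ^ j0) - real j0 * qoff p j0 * xi ^ (j0 - 1) * (1 - xi)"
      using mult_strict_left_mono[OF aux_pow_strict[OF x1(1,3) j0(1)] j0(2)] by (simp add: algebra_simps)
  qed
  then have "a * (1 - xi) < 1 * (1 - xi)" by simp
  then show ?thesis using x1 by (simp add: mult_less_cancel_right)
qed

end

lemma real_sum_list_map: "real (sum_list (map f ts)) = sum_list (map (\<lambda>t. real (f t)) ts)"
  by (induction ts) auto

lemma count_sub_le: "count_sub k t \<le> num_vertices t"
proof (induction t)
  case (Node ts)
  have "sum_list (map (count_sub k) ts) \<le> sum_list (map num_vertices ts)"
    by (rule sum_list_mono) (use Node in auto)
  then show ?case by simp
qed

lemma num_deg_le: "num_deg k t \<le> num_vertices t"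
proof (cases t)
  case (Node ts)
  have "sum_list (map (count_sub k) ts) \<le> sum_list (map num_vertices ts)"
    by (rule sum_list_mono) (use count_sub_le in auto)
  then show ?thesis using Node by simp
qed

lemma num_edges_eq: "num_edges t + 1 = num_vertices t"
proof (induction t)
  case (Node ts)
  have "sum_list (map num_edges ts) + length ts = sum_list (map num_vertices ts)"
    using Node
  proof (induction ts)
    case Nil then show ?case by simp
  next
    case (Cons b ts)
    have hb: "Suc (num_edges b) = num_vertices b" using Cons.prems by auto
    have ih: "sum_list (map num_edges ts) + length ts = sum_list (map num_vertices ts)"
      using Cons.IH Cons.prems by auto
    show ?case using hb ih by simp
  qed
  then show ?case by simp
qed

context gwsup begin

lemma Fseq_le_xi: "Fseq n \<le> xi"
  by (rule has_sum_subset_le[OF Fseq_has_sum xi_has_sum]) (auto simp: w_nonneg)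

lemma M_rec:
  assumes w: "(sub_w p has_sum s) A" and s: "0 \<le> s" "s \<le> xi"
    and c: "((\<lambda>t. sub_w p t * real (num_vertices t)) has_sum c) A"
  shows "((\<lambda>t. sub_w p t * real (num_vertices t)) has_sum (hq p s + dq p s * c)) (NodeSet A)"
proof -
  have s1: "s \<le> 1" using s xi_le1 by linarith
  have ser: "(\<lambda>j. qoff p j * (s ^ j * 1 + real j * s ^ (j - 1) * c)) sums (hq p s + dq p s * c)"
  proof -
    have "(\<lambda>j. qoff p j * s ^ j + real j * qoff p j * s ^ (j - 1) * c) sums (hq p s + dq p s * c)"
      using hq_summable[OF s(1) s1] unfolding hq_def
      by (intro sums_add sums_mult2 dq_sums s summable_sums)
    then show ?thesis by (simp add: algebra_simps)
  qed
  have "((\<lambda>t. qoff p (length (kids t)) * prod_list (map (sub_w p) (kids t)) * (1 + sum_list (map (\<lambda>t. real (num_vertices t)) (kids t))))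
           has_sum (hq p s + dq p s * c)) (NodeSet A)"
    by (rule has_sum_decomp[OF w _ c _ q_nonneg _ ser]) (auto simp: w_nonneg)
  then show ?thesis
    by (rule has_sum_cong[THEN iffD1, rotated]) (auto simp: NodeSet_def real_sum_list_map)
qed

lemma M_Hs: "\<exists>c. ((\<lambda>t. sub_w p t * real (num_vertices t)) has_sum c) (Hs n) \<and> 0 \<le> c \<and> c \<le> xi / (1 - a)"
proof (induction n)
  case 0
  then show ?case using xi_nonneg a_less1 by (intro exI[of _ 0]) auto
next
  case (Suc n)
  then obtain c where c: "((\<lambda>t. sub_w p t * real (num_vertices t)) has_sum c) (Hs n)" "0 \<le> c" "c \<le> xi / (1 - a)"
    by blast
  have h: "((\<lambda>t. sub_w p t * real (num_vertices t)) has_sum (hq p (Fseq n) + dq p (Fseq n) * c)) (Hs (Suc n))"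
    using M_rec[OF Fseq_has_sum Fseq_nonneg Fseq_le_xi c(1)] by simp
  have b1: "hq p (Fseq n) \<le> xi" using Fseq_le_xi[of "Suc n"] by (simp add: Fseq_Suc)
  have b2: "dq p (Fseq n) \<le> a" "0 \<le> dq p (Fseq n)" using dq_mono dq_nonneg Fseq_nonneg Fseq_le_xi by auto
  have b0: "0 \<le> hq p (Fseq n)" using hq_nonneg Fseq_nonneg Fseq_less1 by (simp add: less_imp_le)
  have "dq p (Fseq n) * c \<le> a * (xi / (1 - a))"
    using b2 c a_nonneg by (intro mult_mono) auto
  then have "hq p (Fseq n) + dq p (Fseq n) * c \<le> xi + a * (xi / (1 - a))" using b1 by linarith
  also have "\<dots> = xi / (1 - a)" using a_less1 by (simp add: field_simps)
  finally show ?case using h b0 b2 c by (intro exI[of _ "hq p (Fseq n) + dq p (Fseq n) * c"]) auto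
qed

lemma M_summable: "(\<lambda>t. sub_w p t * real (num_vertices t)) summable_on UNIV"
proof (rule nonneg_bdd_above_summable_on)
  show "bdd_above (sum (\<lambda>t. sub_w p t * real (num_vertices t)) ` {F. F \<subseteq> UNIV \<and> finite F})"
  proof (rule bdd_aboveI2)
    fix F :: "ptree set" assume "F \<in> {F. F \<subseteq> UNIV \<and> finite F}"
    then have F: "finite F" by auto
    then obtain n where n: "F \<subseteq> Hs n" using finite_in_Hs by blast
    obtain c where c: "((\<lambda>t. sub_w p t * real (num_vertices t)) has_sum c) (Hs n)" "c \<le> xi / (1 - a)"
      using M_Hs by blast
    have "sum (\<lambda>t. sub_w p t * real (num_vertices t)) F \<le> c"
      by (rule finite_sum_le_has_sum[OF F n c(1)]) (simp add: w_nonneg)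
    then show "sum (\<lambda>t. sub_w p t * real (num_vertices t)) F \<le> xi / (1 - a)" using c by linarith
  qed
qed (simp add: w_nonneg)

definition M :: real where "M = infsum (\<lambda>t. sub_w p t * real (num_vertices t)) UNIV"

lemma M_has_sum: "((\<lambda>t. sub_w p t * real (num_vertices t)) has_sum M) UNIV"
  unfolding M_def using M_summable by (rule has_sum_infsum)

lemma M_eq: "M = xi + a * M"
proof -
  have "((\<lambda>t. sub_w p t * real (num_vertices t)) has_sum (hq p xi + dq p xi * M)) UNIV"
    using M_rec[OF xi_has_sum xi_nonneg order_refl M_has_sum] by (simp add: NodeSet_UNIV)
  then have "M = hq p xi + dq p xi * M" using M_has_sum has_sum_unique by blast
  then show ?thesis by (simp add: hq_xi a_def)
qed

lemma M_val: "M = xi / (1 - a)"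
  using M_eq a_less1 by (simp add: field_simps)

end

context gwsup begin

lemma Ck_summable: "(\<lambda>t. sub_w p t * real (count_sub k t)) summable_on UNIV"
  by (rule summable_on_comparison_test[OF M_summable])
     (auto simp: w_nonneg count_sub_le intro!: mult_left_mono)

definition Ck :: "nat \<Rightarrow> real" where "Ck k = infsum (\<lambda>t. sub_w p t * real (count_sub k t)) UNIV"

lemma Ck_has_sum: "((\<lambda>t. sub_w p t * real (count_sub k t)) has_sum Ck k) UNIV"
  unfolding Ck_def using Ck_summable by (rule has_sum_infsum)

lemma single_sums:
  fixes f :: "nat \<Rightarrow> real"
  shows "(\<lambda>j. f j * (if Suc j = k then 1 else 0)) sums (if k = 0 then 0 else f (k - 1))"
proof (cases k)
  case 0 then show ?thesis by (simp add: sums_zero)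
next
  case (Suc k')
  have "(\<lambda>j. if j = k' then f j else 0) sums f k'" by (rule sums_single)
  then show ?thesis using Suc by (simp add: if_distrib cong: if_cong)
qed

lemma Ck_eq: "Ck k = (if k = 0 then 0 else qoff p (k - 1) * xi ^ (k - 1)) + a * Ck k"
proof -
  define e where "e = (\<lambda>j. if Suc j = k then 1 else (0::real))"
  have ser: "(\<lambda>j. qoff p j * (xi ^ j * e j + real j * xi ^ (j - 1) * Ck k)) sums
        ((if k = 0 then 0 else qoff p (k - 1) * xi ^ (k - 1)) + a * Ck k)"
  proof -
    have "(\<lambda>j. (qoff p j * xi ^ j) * e j + real j * qoff p j * xi ^ (j - 1) * Ck k) sums
        ((if k = 0 then 0 else qoff p (k - 1) * xi ^ (k - 1)) + a * Ck k)"
      unfolding e_def a_def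
      by (intro sums_add single_sums[of "\<lambda>j. qoff p j * xi ^ j"] sums_mult2 dq_sums xi_nonneg order_refl)
    then show ?thesis by (simp add: algebra_simps)
  qed
  have "((\<lambda>t. qoff p (length (kids t)) * prod_list (map (sub_w p) (kids t)) * (e (length (kids t)) + sum_list (map (\<lambda>t. real (count_sub k t)) (kids t))))
           has_sum ((if k = 0 then 0 else qoff p (k - 1) * xi ^ (k - 1)) + a * Ck k)) (NodeSet UNIV)"
    by (rule has_sum_decomp[OF xi_has_sum _ Ck_has_sum _ q_nonneg _ ser]) (auto simp: w_nonneg e_def)
  then have "((\<lambda>t. sub_w p t * real (count_sub k t)) has_sum ((if k = 0 then 0 else qoff p (k - 1) * xi ^ (k - 1)) + a * Ck k)) UNIV"
    unfolding NodeSet_UNIV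
    by (rule has_sum_cong[THEN iffD1, rotated], case_tac x, auto simp: e_def real_sum_list_map)
  then show ?thesis using Ck_has_sum has_sum_unique by blast
qed

lemma Ck_val: "Ck k = (if k = 0 then 0 else qoff p (k - 1) * xi ^ (k - 1) / (1 - a))"
  using Ck_eq[of k] a_less1 by (auto simp: field_simps)

lemma gw_decomp:
  assumes g: "\<And>t. g t \<ge> 0" and c: "((\<lambda>t. sub_w p t * g t) has_sum c) UNIV"
    and e: "\<And>j. e j \<ge> 0"
    and ser: "(\<lambda>j. p j * (xi ^ j * e j + real j * xi ^ (j - 1) * c)) sums S"
    and F: "\<And>ts. F (Node ts) = gw_prob p (Node ts) * (e (length ts) + sum_list (map g ts))"
  shows "(F has_sum S) UNIV"
proof -
  have "((\<lambda>t. p (length (kids t)) * prod_list (map (sub_w p) (kids t)) * (e (length (kids t)) + sum_list (map g (kids t))))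
           has_sum S) (NodeSet UNIV)"
    by (rule has_sum_decomp[OF xi_has_sum _ c _ p_nonneg e ser]) (auto simp: w_nonneg g)
  then show ?thesis unfolding NodeSet_UNIV
    by (rule has_sum_cong[THEN iffD1, rotated], case_tac x, auto simp: F)
qed

lemma pxi_summable: "summable (\<lambda>j. p j * xi ^ j)"
proof (rule summable_comparison_test'[of p])
  show "summable p" using p_sum by (simp add: sums_iff)
  show "norm (p n * xi ^ n) \<le> p n" for n
    using p_nonneg[of n] xi_nonneg xi_le1 by (auto simp: abs_mult intro!: mult_left_le power_le_one)
qed

definition Gx :: real where "Gx = (\<Sum>j. p j * xi ^ j)"

lemma Dp_sums: "(\<lambda>j. real j * p j * xi ^ (j - 1)) sums (mu p * xi)"
proof -
  have "(\<lambda>n. mu p * (qoff p n * xi ^ n)) sums (mu p * hq p xi)"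
    unfolding hq_def by (intro sums_mult summable_sums hq_summable xi_nonneg xi_le1)
  moreover have "mu p * (qoff p n * xi ^ n) = real (Suc n) * p (Suc n) * xi ^ (Suc n - 1)" for n
    using mu_pos by (simp add: qoff_def)
  ultimately have "(\<lambda>n. (\<lambda>j. real j * p j * xi ^ (j - 1)) (Suc n)) sums (mu p * xi)"
    by (simp add: hq_xi)
  then show ?thesis by (subst (asm) sums_Suc_iff) simp
qed

lemma gw_G: "(gw_prob p has_sum Gx) UNIV"
proof (rule gw_decomp[where g = "\<lambda>_. 0" and c = 0 and e = "\<lambda>_. 1"])
  show "(\<lambda>j. p j * (xi ^ j * 1 + real j * xi ^ (j - 1) * 0)) sums Gx"
    unfolding Gx_def using pxi_summable by (simp add: summable_sums)
qed auto

lemma gw_N: "((\<lambda>t. gw_prob p t * real (num_vertices t)) has_sum (Gx + mu p * xi * M)) UNIV"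
proof (rule gw_decomp[where g = "\<lambda>t. real (num_vertices t)" and c = M and e = "\<lambda>_. 1"])
  have "(\<lambda>j. p j * xi ^ j + real j * p j * xi ^ (j - 1) * M) sums (Gx + mu p * xi * M)"
    unfolding Gx_def using pxi_summable by (intro sums_add sums_mult2 Dp_sums summable_sums)
  then show "(\<lambda>j. p j * (xi ^ j * 1 + real j * xi ^ (j - 1) * M)) sums (Gx + mu p * xi * M)"
    by (simp add: algebra_simps)
qed (auto simp: M_has_sum real_sum_list_map)

lemma gw_A: "((\<lambda>t. gw_prob p t * real (num_deg k t)) has_sum (p k * xi ^ k + mu p * xi * Ck k)) UNIV"
proof (rule gw_decomp[where g = "\<lambda>t. real (count_sub k t)" and c = "Ck k" and e = "\<lambda>j. if j = k then 1 else 0"])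
  have "(\<lambda>j. (if j = k then p j * xi ^ j else 0) + real j * p j * xi ^ (j - 1) * Ck k) sums (p k * xi ^ k + mu p * xi * Ck k)"
    by (intro sums_add sums_single sums_mult2 Dp_sums)
  moreover have "(\<lambda>j. p j * (xi ^ j * (if j = k then 1 else 0) + real j * xi ^ (j - 1) * Ck k)) =
      (\<lambda>j. (if j = k then p j * xi ^ j else 0) + real j * p j * xi ^ (j - 1) * Ck k)"
    by (auto simp: fun_eq_iff algebra_simps)
  ultimately show "(\<lambda>j. p j * (xi ^ j * (if j = k then 1 else 0) + real j * xi ^ (j - 1) * Ck k)) sums (p k * xi ^ k + mu p * xi * Ck k)"
    by simp
qed (auto simp: Ck_has_sum real_sum_list_map)

end

definition P1 :: "real \<Rightarrow> real \<Rightarrow> real \<Rightarrow> real" where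
  "P1 x y k = x^2 + (1 - k) * y + 2 * (k - 1) * x^2 * y - k * y^2"
definition P2 :: "real \<Rightarrow> real \<Rightarrow> real \<Rightarrow> real" where
  "P2 x y k = 5 * x^2 - 3 * x^3 + y * (5 - 5 * k + 3 * x + (9 * k - 6) * x^2) - 4 * (k + 1) * y^2"
definition P3 :: "real \<Rightarrow> real \<Rightarrow> real \<Rightarrow> real" where
  "P3 x y k = 2 * k * x^2 * (1 - x) + y * (1 + k / 2 + 2 * k * x - k * x^2 / 2 - 3 * k^2 / 2 + 5 * k^2 * x^2 / 2) - (k + 1)^2 * y^2"

definition Dt :: "real \<Rightarrow> real \<Rightarrow> real" where
  "Dt m t = 6 + 6*(m+3)*t + 3*(m+3)*(m+2)*t^2 + (m+3)*(m+2)*(m+1)*t^3"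

lemma Dt_pos: "0 \<le> m \<Longrightarrow> 0 \<le> t \<Longrightarrow> 0 < Dt m t"
  unfolding Dt_def by (intro add_pos_nonneg) auto

lemma P1_ident:
  fixes t m :: real
  assumes "0 \<le> t" "0 \<le> m"
  shows "P1 (1 / (1 + t)) (6 / Dt m t) (m + 3) * ((1 + t)^2 * (Dt m t)^2)
   = (72 + 108 * m + 36 * m^2) * t + (144 + 252 * m + 126 * m^2 + 18 * m^3) * t^2 + (144 + 300 * m + 210 * m^2 + 60 * m^3 + 6 * m^4) * t^3 + (180 + 384 * m + 279 * m^2 + 84 * m^3 + 9 * m^4) * t^4 + (144 + 408 * m + 444 * m^2 + 234 * m^3 + 60 * m^4 + 6 * m^5) * t^5 + (36 + 132 * m + 193 * m^2 + 144 * m^3 + 58 * m^4 + 12 * m^5 + 1 * m^6) * t^6"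
proof -
  define D where "D = Dt m t"
  have D: "D > 0" unfolding D_def using assms by (intro Dt_pos)
  have t1: "1 + t > 0" using assms by auto
  define x where "x = 1 / (1 + t)"
  define y where "y = 6 / D"
  define X where "X = 1 + t"
  have xX: "x * X = 1" unfolding x_def X_def using t1 by simp
  have yD: "y * D = 6" unfolding y_def using D by simp
  have "P1 x y (m + 3) * (X^2 * D^2) = (x*X)^2 * D^2 + (1-(m+3))*(y*D)*X^2*D + 2*((m+3)-1)*(x*X)^2*(y*D)*D - (m+3)*(y*D)^2*X^2"
    unfolding P1_def by algebra
  also have "\<dots> = D^2 + (1-(m+3))*6*X^2*D + 2*((m+3)-1)*6*D - (m+3)*36*X^2"
    by (simp add: xX yD)
  also have "\<dots> = (72 + 108 * m + 36 * m^2) * t + (144 + 252 * m + 126 * m^2 + 18 * m^3) * t^2 + (144 + 300 * m + 210 * m^2 + 60 * m^3 + 6 * m^4) * t^3 + (180 + 384 * m + 279 * m^2 + 84 * m^3 + 9 * m^4) * t^4 + (144 + 408 * m + 444 * m^2 + 234 * m^3 + 60 * m^4 + 6 * m^5) * t^5 + (36 + 132 * m + 193 * m^2 + 144 * m^3 + 58 * m^4 + 12 * m^5 + 1 * m^6) * t^6"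
    unfolding D_def Dt_def X_def by algebra
  finally show ?thesis unfolding x_def y_def X_def D_def .
qed

lemma P2_ident:
  fixes t m :: real
  assumes "0 \<le> t" "0 \<le> m"
  shows "P2 (1 / (1 + t)) (6 / Dt m t) (m + 3) * ((1 + t)^3 * (Dt m t)^2)
   = (288 + 432 * m + 144 * m^2) * t + (648 + 1116 * m + 540 * m^2 + 72 * m^3) * t^2 + (468 + 990 * m + 714 * m^2 + 216 * m^3 + 24 * m^4) * t^3 + (576 + 1092 * m + 642 * m^2 + 132 * m^3 + 6 * m^4) * t^4 + (1080 + 2430 * m + 1977 * m^2 + 762 * m^3 + 147 * m^4 + 12 * m^5) * t^5 + (792 + 2304 * m + 2606 * m^2 + 1458 * m^3 + 416 * m^4 + 54 * m^5 + 2 * m^6) * t^6 + (180 + 660 * m + 965 * m^2 + 720 * m^3 + 290 * m^4 + 60 * m^5 + 5 * m^6) * t^7"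
proof -
  define D where "D = Dt m t"
  have D: "D > 0" unfolding D_def using assms by (intro Dt_pos)
  have t1: "1 + t > 0" using assms by auto
  define x where "x = 1 / (1 + t)"
  define y where "y = 6 / D"
  define X where "X = 1 + t"
  define k where "k = m + 3"
  have xX: "x * X = 1" unfolding x_def X_def using t1 by simp
  have yD: "y * D = 6" unfolding y_def using D by simp
  have "P2 x y k * (X^3 * D^2) = 5*(x*X)^2*X*D^2 - 3*(x*X)^3*D^2 + (y*D)*(5-5*k)*X^3*D + 3*(x*X)*(y*D)*X^2*D + (9*k-6)*(x*X)^2*(y*D)*X*D - 4*(k+1)*(y*D)^2*X^3"
    unfolding P2_def by algebra
  also have "\<dots> = 5*X*D^2 - 3*D^2 + 6*(5-5*k)*X^3*D + 18*X^2*D + 6*(9*k-6)*X*D - 144*(k+1)*X^3"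
    by (simp add: xX yD)
  also have "\<dots> = (288 + 432 * m + 144 * m^2) * t + (648 + 1116 * m + 540 * m^2 + 72 * m^3) * t^2 + (468 + 990 * m + 714 * m^2 + 216 * m^3 + 24 * m^4) * t^3 + (576 + 1092 * m + 642 * m^2 + 132 * m^3 + 6 * m^4) * t^4 + (1080 + 2430 * m + 1977 * m^2 + 762 * m^3 + 147 * m^4 + 12 * m^5) * t^5 + (792 + 2304 * m + 2606 * m^2 + 1458 * m^3 + 416 * m^4 + 54 * m^5 + 2 * m^6) * t^6 + (180 + 660 * m + 965 * m^2 + 720 * m^3 + 290 * m^4 + 60 * m^5 + 5 * m^6) * t^7"
    unfolding D_def Dt_def X_def k_def by algebra
  finally show ?thesis unfolding x_def y_def X_def D_def k_def .
qed

lemma P3_ident: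
  fixes t m :: real
  assumes "0 \<le> t" "0 \<le> m"
  shows "P3 (1 / (1 + t)) (6 / Dt m t) (m + 3) * (2 * (1 + t)^3 * (Dt m t)^2)
   = (432 + 792 * m + 432 * m^2 + 72 * m^3) * t + (648 + 1404 * m + 1044 * m^2 + 324 * m^3 + 36 * m^4) * t^2 + (- 144 - 120 * m + 192 * m^2 + 252 * m^3 + 96 * m^4 + 12 * m^5) * t^3 + (432 + 468 * m - 306 * m^2 - 516 * m^3 - 198 * m^4 - 24 * m^5) * t^4 + (2160 + 5184 * m + 4584 * m^2 + 1914 * m^3 + 384 * m^4 + 30 * m^5) * t^5 + (1800 + 5712 * m + 7266 * m^2 + 4770 * m^3 + 1710 * m^4 + 318 * m^5 + 24 * m^6) * t^6 + (432 + 1728 * m + 2844 * m^2 + 2500 * m^3 + 1272 * m^4 + 376 * m^5 + 60 * m^6 + 4 * m^7) * t^7"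
proof -
  define D where "D = Dt m t"
  have D: "D > 0" unfolding D_def using assms by (intro Dt_pos)
  have t1: "1 + t > 0" using assms by auto
  define x where "x = 1 / (1 + t)"
  define y where "y = 6 / D"
  define X where "X = 1 + t"
  define k where "k = m + 3"
  have xX: "x * X = 1" unfolding x_def X_def using t1 by simp
  have yD: "y * D = 6" unfolding y_def using D by simp
  have "P3 x y k * (2 * X^3 * D^2) = 4*k*(x*X)^2*X*D^2 - 4*k*(x*X)^3*D^2 + (y*D)*D*((2 + k - 3*k^2)*X^3 + 4*k*(x*X)*X^2 + (5*k^2 - k)*(x*X)^2*X) - 2*(k+1)^2*(y*D)^2*X^3"
    unfolding P3_def by algebra
  also have "\<dots> = 4*k*X*D^2 - 4*k*D^2 + 6*D*((2 + k - 3*k^2)*X^3 + 4*k*X^2 + (5*k^2 - k)*X) - 72*(k+1)^2*X^3"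
    by (simp add: xX yD)
  also have "\<dots> = (432 + 792 * m + 432 * m^2 + 72 * m^3) * t + (648 + 1404 * m + 1044 * m^2 + 324 * m^3 + 36 * m^4) * t^2 + (- 144 - 120 * m + 192 * m^2 + 252 * m^3 + 96 * m^4 + 12 * m^5) * t^3 + (432 + 468 * m - 306 * m^2 - 516 * m^3 - 198 * m^4 - 24 * m^5) * t^4 + (2160 + 5184 * m + 4584 * m^2 + 1914 * m^3 + 384 * m^4 + 30 * m^5) * t^5 + (1800 + 5712 * m + 7266 * m^2 + 4770 * m^3 + 1710 * m^4 + 318 * m^5 + 24 * m^6) * t^6 + (432 + 1728 * m + 2844 * m^2 + 2500 * m^3 + 1272 * m^4 + 376 * m^5 + 60 * m^6 + 4 * m^7) * t^7"
    unfolding D_def Dt_def X_def k_def by algebra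
  finally show ?thesis unfolding x_def y_def X_def D_def k_def .
qed


lemma quad_nonneg:
  fixes a b c t :: real
  assumes "0 \<le> a" "0 \<le> c" "b^2 \<le> 4 * a * c"
  shows "0 \<le> a - b * t + c * t^2"
proof (cases "c = 0")
  case True
  then have "b^2 \<le> 0" using assms by simp
  then have "b^2 = 0" using zero_le_power2[of b] by linarith
  then have "b = 0" by simp
  then show ?thesis using True assms by simp
next
  case False
  then have c: "c > 0" using assms by auto
  have "4 * c * (a - b * t + c * t^2) = (2 * c * t - b)^2 + (4 * a * c - b^2)"
    by (simp add: power2_eq_square algebra_simps)
  also have "\<dots> \<ge> 0" using assms by simp
  finally have "0 \<le> 4 * c * (a - b * t + c * t^2)" .
  then show ?thesis using c by (simp add: zero_le_mult_iff)
qed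

lemma Q1_nonneg:
  fixes t m :: real assumes "0 \<le> t" "0 \<le> m"
  shows "0 \<le> (72 + 108 * m + 36 * m^2) * t + (144 + 252 * m + 126 * m^2 + 18 * m^3) * t^2 + (144 + 300 * m + 210 * m^2 + 60 * m^3 + 6 * m^4) * t^3 + (180 + 384 * m + 279 * m^2 + 84 * m^3 + 9 * m^4) * t^4 + (144 + 408 * m + 444 * m^2 + 234 * m^3 + 60 * m^4 + 6 * m^5) * t^5 + (36 + 132 * m + 193 * m^2 + 144 * m^3 + 58 * m^4 + 12 * m^5 + 1 * m^6) * t^6"
  using assms by (intro add_nonneg_nonneg mult_nonneg_nonneg zero_le_power) auto

lemma Q2_nonneg:
  fixes t m :: real assumes "0 \<le> t" "0 \<le> m"
  shows "0 \<le> (288 + 432 * m + 144 * m^2) * t + (648 + 1116 * m + 540 * m^2 + 72 * m^3) * t^2 + (468 + 990 * m + 714 * m^2 + 216 * m^3 + 24 * m^4) * t^3 + (576 + 1092 * m + 642 * m^2 + 132 * m^3 + 6 * m^4) * t^4 + (1080 + 2430 * m + 1977 * m^2 + 762 * m^3 + 147 * m^4 + 12 * m^5) * t^5 + (792 + 2304 * m + 2606 * m^2 + 1458 * m^3 + 416 * m^4 + 54 * m^5 + 2 * m^6) * t^6 + (180 + 660 * m + 965 * m^2 + 720 * m^3 + 290 * m^4 + 60 * m^5 + 5 * m^6) * t^7"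
  using assms by (intro add_nonneg_nonneg mult_nonneg_nonneg zero_le_power) auto

lemma Q3_pos:
  fixes t m :: real assumes t: "0 < t" and m: "0 \<le> m"
  shows "0 < (432 + 792 * m + 432 * m^2 + 72 * m^3) * t + (648 + 1404 * m + 1044 * m^2 + 324 * m^3 + 36 * m^4) * t^2 + (- 144 - 120 * m + 192 * m^2 + 252 * m^3 + 96 * m^4 + 12 * m^5) * t^3 + (432 + 468 * m - 306 * m^2 - 516 * m^3 - 198 * m^4 - 24 * m^5) * t^4 + (2160 + 5184 * m + 4584 * m^2 + 1914 * m^3 + 384 * m^4 + 30 * m^5) * t^5 + (1800 + 5712 * m + 7266 * m^2 + 4770 * m^3 + 1710 * m^4 + 318 * m^5 + 24 * m^6) * t^6 + (432 + 1728 * m + 2844 * m^2 + 2500 * m^3 + 1272 * m^4 + 376 * m^5 + 60 * m^6 + 4 * m^7) * t^7"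
proof -
  define c1 where "c1 = 432 + 792 * m + 432 * m^2 + 72 * m^3"
  define c2 where "c2 = 648 + 1404 * m + 1044 * m^2 + 324 * m^3 + 36 * m^4"
  define n3 where "n3 = 144 + 120 * m"
  define c4 where "c4 = 432 + 468 * m"
  define c3 where "c3 = 192 * m^2 + 252 * m^3 + 96 * m^4 + 12 * m^5"
  define n4 where "n4 = 306 * m^2 + 516 * m^3 + 198 * m^4 + 24 * m^5"
  define c5 where "c5 = 2160 + 5184 * m + 4584 * m^2 + 1914 * m^3 + 384 * m^4 + 30 * m^5"
  define c6 where "c6 = 1800 + 5712 * m + 7266 * m^2 + 4770 * m^3 + 1710 * m^4 + 318 * m^5 + 24 * m^6"
  define c7 where "c7 = 432 + 1728 * m + 2844 * m^2 + 2500 * m^3 + 1272 * m^4 + 376 * m^5 + 60 * m^6 + 4 * m^7"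
  have eq: "(432 + 792 * m + 432 * m^2 + 72 * m^3) * t + (648 + 1404 * m + 1044 * m^2 + 324 * m^3 + 36 * m^4) * t^2 + (- 144 - 120 * m + 192 * m^2 + 252 * m^3 + 96 * m^4 + 12 * m^5) * t^3 + (432 + 468 * m - 306 * m^2 - 516 * m^3 - 198 * m^4 - 24 * m^5) * t^4 + (2160 + 5184 * m + 4584 * m^2 + 1914 * m^3 + 384 * m^4 + 30 * m^5) * t^5 + (1800 + 5712 * m + 7266 * m^2 + 4770 * m^3 + 1710 * m^4 + 318 * m^5 + 24 * m^6) * t^6 + (432 + 1728 * m + 2844 * m^2 + 2500 * m^3 + 1272 * m^4 + 376 * m^5 + 60 * m^6 + 4 * m^7) * t^7
    = c1 * t + t^2 * (c2 - n3 * t + c4 * t^2) + t^3 * (c3 - n4 * t + c5 * t^2) + c6 * t^6 + c7 * t^7"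
    unfolding c1_def c2_def n3_def c4_def c3_def n4_def c5_def c6_def c7_def by algebra
  have d1: "4 * c2 * c4 - n3^2 = 1099008 + 3604608 * m + 4417920 * m^2 + 2514240 * m^3 + 668736 * m^4 + 67392 * m^5"
    unfolding c2_def c4_def n3_def by algebra
  have d2: "4 * c3 * c5 - n4^2 = 1658880 * m^2 + 6158592 * m^3 + 9481788 * m^4 + 7869168 * m^5 + 3845880 * m^6 + 1146096 * m^7 + 205596 * m^8 + 20448 * m^9 + 864 * m^10"
    unfolding c3_def c5_def n4_def by algebra
  have "0 \<le> 1099008 + 3604608 * m + 4417920 * m^2 + 2514240 * m^3 + 668736 * m^4 + 67392 * m^5"
    using m by (intro add_nonneg_nonneg mult_nonneg_nonneg zero_le_power) auto
  then have "n3^2 \<le> 4 * c2 * c4" using d1 by linarith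
  moreover have "0 \<le> c2" "0 \<le> c4" using m unfolding c2_def c4_def by (intro add_nonneg_nonneg mult_nonneg_nonneg zero_le_power; simp)+
  ultimately have q1: "0 \<le> c2 - n3 * t + c4 * t^2" by (intro quad_nonneg) auto
  have "0 \<le> 1658880 * m^2 + 6158592 * m^3 + 9481788 * m^4 + 7869168 * m^5 + 3845880 * m^6 + 1146096 * m^7 + 205596 * m^8 + 20448 * m^9 + 864 * m^10"
    using m by (intro add_nonneg_nonneg mult_nonneg_nonneg zero_le_power) auto
  then have "n4^2 \<le> 4 * c3 * c5" using d2 by linarith
  moreover have "0 \<le> c3" "0 \<le> c5" using m unfolding c3_def c5_def by (intro add_nonneg_nonneg mult_nonneg_nonneg zero_le_power; simp)+
  ultimately have q2: "0 \<le> c3 - n4 * t + c5 * t^2" by (intro quad_nonneg) auto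
  have "0 < c1 * t" using t m unfolding c1_def by (intro mult_pos_pos add_pos_nonneg) auto
  moreover have "0 \<le> t^2 * (c2 - n3 * t + c4 * t^2)" using q1 by simp
  moreover have "0 \<le> t^3 * (c3 - n4 * t + c5 * t^2)" using q2 t by simp
  moreover have "0 \<le> c6 * t^6" using t m unfolding c6_def by (intro add_nonneg_nonneg mult_nonneg_nonneg zero_le_power) auto
  moreover have "0 \<le> c7 * t^7" using t m unfolding c7_def by (intro add_nonneg_nonneg mult_nonneg_nonneg zero_le_power) auto
  ultimately show ?thesis unfolding eq by linarith
qed


lemma binom3:
  fixes t :: real assumes t: "0 \<le> t"
  shows "6 + 6 * real K * t + 3 * real K * (real K - 1) * t^2 + real K * (real K - 1) * (real K - 2) * t^3 \<le> 6 * (1 + t)^K"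
proof (induction K)
  case 0 then show ?case by simp
next
  case (Suc K)
  define n where "n = real K"
  have nn: "0 \<le> n * (n - 1) * (n - 2)"
  proof (cases "K \<ge> 2")
    case True then show ?thesis unfolding n_def by (intro mult_nonneg_nonneg) auto
  next
    case False then have "K = 0 \<or> K = 1" by auto
    then show ?thesis unfolding n_def by auto
  qed
  have "6 + 6 * (n + 1) * t + 3 * (n + 1) * n * t^2 + (n + 1) * n * (n - 1) * t^3
      = (1 + t) * (6 + 6 * n * t + 3 * n * (n - 1) * t^2 + n * (n - 1) * (n - 2) * t^3) - n * (n - 1) * (n - 2) * t^4"
    by algebra
  also have "\<dots> \<le> (1 + t) * (6 + 6 * n * t + 3 * n * (n - 1) * t^2 + n * (n - 1) * (n - 2) * t^3)"
    using nn t by simp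
  also have "\<dots> \<le> (1 + t) * (6 * (1 + t)^K)"
    using Suc t unfolding n_def by (intro mult_left_mono) auto
  finally show ?case unfolding n_def by (simp add: algebra_simps)
qed

lemma conc_nonneg:
  fixes A0 A1 A2 y Y :: real
  assumes "0 \<le> A2" "0 \<le> A0" "0 < y" "y \<le> Y" "0 \<le> A0 + A1 * Y - A2 * Y^2"
  shows "0 \<le> A0 + A1 * y - A2 * y^2"
proof -
  have Y: "0 < Y" using assms by linarith
  have "Y * (A0 + A1 * y - A2 * y^2) = (Y - y) * A0 + y * (A0 + A1 * Y - A2 * Y^2) + A2 * y * Y * (Y - y)"
    by algebra
  also have "\<dots> \<ge> 0" using assms Y by (intro add_nonneg_nonneg mult_nonneg_nonneg) auto
  finally show ?thesis using Y by (simp add: zero_le_mult_iff)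
qed

lemma conc_pos:
  fixes A0 A1 A2 y Y :: real
  assumes "0 \<le> A2" "0 \<le> A0" "0 < y" "y \<le> Y" "0 < A0 + A1 * Y - A2 * Y^2"
  shows "0 < A0 + A1 * y - A2 * y^2"
proof -
  have Y: "0 < Y" using assms by linarith
  have "Y * (A0 + A1 * y - A2 * y^2) = (Y - y) * A0 + y * (A0 + A1 * Y - A2 * Y^2) + A2 * y * Y * (Y - y)"
    by algebra
  moreover have "0 < y * (A0 + A1 * Y - A2 * Y^2)" using assms by simp
  moreover have "0 \<le> (Y - y) * A0 + A2 * y * Y * (Y - y)" using assms Y by (intro add_nonneg_nonneg mult_nonneg_nonneg) auto
  ultimately have "0 < Y * (A0 + A1 * y - A2 * y^2)" by linarith
  then show ?thesis using Y by (simp add: zero_less_mult_iff)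
qed

lemma P_at:
  fixes x :: real and K :: nat
  assumes x: "0 < x" "x < 1" and K: "3 \<le> K"
  shows "0 \<le> P1 x (x^K) (real K)" "0 \<le> P2 x (x^K) (real K)" "0 < P3 x (x^K) (real K)"
proof -
  define t where "t = 1 / x - 1"
  define m where "m = real K - 3"
  have t: "0 < t" using x unfolding t_def by (simp add: field_simps)
  have m: "0 \<le> m" using K unfolding m_def by simp
  have xt: "1 / (1 + t) = x" unfolding t_def using x by simp
  have k: "m + 3 = real K" unfolding m_def by simp
  define Y where "Y = 6 / Dt m t"
  have D: "0 < Dt m t" using Dt_pos m t by simp
  have "Dt m t \<le> 6 * (1 + t)^K"
    using binom3[of t K] t unfolding Dt_def m_def by (simp add: algebra_simps)
  then have "6 / (6 * (1 + t)^K) \<le> 6 / Dt m t" using D by (intro divide_left_mono) auto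
  then have yY: "x^K \<le> Y" unfolding Y_def using xt[symmetric] by (simp add: power_one_over)
  have y0: "0 < x^K" using x by simp
  have t1: "0 < 1 + t" using t by simp
  have PY1: "0 \<le> P1 x Y (real K)"
  proof -
    have "0 \<le> P1 x Y (real K) * ((1 + t)^2 * (Dt m t)^2)"
      using P1_ident[of t m] Q1_nonneg[of t m] t m unfolding Y_def xt k by simp
    moreover have "0 < (1 + t)^2 * (Dt m t)^2" using t1 D by simp
    ultimately show ?thesis by (auto simp: zero_le_mult_iff)
  qed
  have PY2: "0 \<le> P2 x Y (real K)"
  proof -
    have "0 \<le> P2 x Y (real K) * ((1 + t)^3 * (Dt m t)^2)"
      using P2_ident[of t m] Q2_nonneg[of t m] t m unfolding Y_def xt k by simp
    moreover have "0 < (1 + t)^3 * (Dt m t)^2" using t1 D by simp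
    ultimately show ?thesis by (auto simp: zero_le_mult_iff)
  qed
  have PY3: "0 < P3 x Y (real K)"
  proof -
    have "0 < P3 x Y (real K) * (2 * (1 + t)^3 * (Dt m t)^2)"
      using P3_ident[of t m] Q3_pos[of t m] t m unfolding Y_def xt k by simp
    moreover have "0 < 2 * (1 + t)^3 * (Dt m t)^2" using t1 D by simp
    ultimately show ?thesis by (auto simp: zero_less_mult_iff)
  qed
  have e1: "P1 x y k = x^2 + ((1 - k) + 2 * (k - 1) * x^2) * y - k * y^2" for y k
    unfolding P1_def by (simp add: algebra_simps)
  have e2: "P2 x y k = (5 * x^2 - 3 * x^3) + (5 - 5 * k + 3 * x + (9 * k - 6) * x^2) * y - (4 * (k + 1)) * y^2" for y k
    unfolding P2_def by (simp add: algebra_simps)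
  have e3: "P3 x y k = 2 * k * x^2 * (1 - x) + (1 + k / 2 + 2 * k * x - k * x^2 / 2 - 3 * k^2 / 2 + 5 * k^2 * x^2 / 2) * y - (k + 1)^2 * y^2" for y k
    unfolding P3_def by (simp add: algebra_simps)
  have Kp: "0 \<le> real K" by simp
  show "0 \<le> P1 x (x^K) (real K)"
    unfolding e1 by (rule conc_nonneg[OF _ _ y0 yY]) (use PY1 x in \<open>auto simp: e1\<close>)
  have "0 \<le> 5 * x^2 - 3 * x^3"
  proof -
    have "x^3 \<le> x^2" using x by (intro power_decreasing) auto
    moreover have "0 \<le> x^2" by simp
    ultimately show ?thesis by linarith
  qed
  then show "0 \<le> P2 x (x^K) (real K)"
    unfolding e2 by (intro conc_nonneg[OF _ _ y0 yY]) (use PY2 in \<open>auto simp: e2\<close>)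
  show "0 < P3 x (x^K) (real K)"
    unfolding e3 by (intro conc_pos[OF _ _ y0 yY]) (use PY3 x in \<open>auto simp: e3\<close>)
qed

definition Uf :: "real \<Rightarrow> real \<Rightarrow> real \<Rightarrow> real \<Rightarrow> real" where
  "Uf x y L k = (y - y^2 + k * L * y * (1 - 2 * y) + L^2 * (2 * k * x^2 * y - k^2 * y^2))
     - ((2 * L^2 + L + 1 - (3 * L + 1) * x) / 2) * (k * (y - x^2))
     + ((1 - x^2 + 2 * L - 4 * L * x^2) / 2) * (k * y * (L * (2 - k) - 1))"

lemma Uf_ident: "Uf x y L k = k * P1 x y k * (L - 1)^2 + (k / 2) * P2 x y k * (L - 1) + P3 x y k"
  unfolding Uf_def P1_def P2_def P3_def by (simp add: field_simps) algebra

lemma Uf_pos: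
  fixes x L :: real and K :: nat
  assumes "0 < x" "x < 1" "3 \<le> K" "1 \<le> L"
  shows "0 < Uf x (x^K) L (real K)"
proof -
  note P = P_at[OF assms(1-3)]
  have "0 \<le> real K * P1 x (x^K) (real K) * (L - 1)^2" using P(1) by simp
  moreover have "0 \<le> (real K / 2) * P2 x (x^K) (real K) * (L - 1)" using P(2) assms(4) by simp
  ultimately show ?thesis unfolding Uf_ident using P(3) by linarith
qed

context gwsup begin

definition L :: real where "L = 1 / (1 - a)"

lemma L_ge1: "1 \<le> L" unfolding L_def using a_nonneg a_less1 by (simp add: field_simps)
lemma L_rel: "L * (1 - a) = 1" unfolding L_def using a_less1 by simp

lemma M_L: "M = xi * L" unfolding M_val L_def by simp

lemma muCk: "mu p * xi * Ck k = real k * p k * xi ^ k * L"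
proof (cases k)
  case 0 then show ?thesis by (simp add: Ck_val)
next
  case (Suc k')
  have "mu p * xi * Ck k = mu p * xi * (real (k' + 1) * p (k' + 1) / mu p * xi ^ k' / (1 - a))"
    using Suc by (simp add: Ck_val qoff_def)
  also have "\<dots> = real k * p k * xi ^ k * L"
    using Suc mu_pos a_less1 unfolding L_def by (simp add: field_simps)
  finally show ?thesis .
qed

lemma Eo_N: "Eo p (\<lambda>t. real (num_vertices t) * ((\<lambda>_. 1) t)\<^sup>2) = Gx + mu p * xi^2 * L"
proof -
  have "Eo p (\<lambda>t. real (num_vertices t) * ((\<lambda>_. 1) t)\<^sup>2) = Gx + mu p * xi * M"
    unfolding Eo_def using gw_N by (simp add: infsumI)
  then show ?thesis by (simp add: M_L power2_eq_square algebra_simps)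
qed

lemma Eo_E: "Eo p (\<lambda>t. real (num_edges t) * (\<lambda>_. 1) t) = mu p * xi^2 * L"
proof -
  have ev: "real (num_edges t) = real (num_vertices t) - 1" for t
    using num_edges_eq[of t] by (simp add: of_nat_eq_iff[symmetric] algebra_simps)
  have "((\<lambda>t. gw_prob p t * real (num_vertices t) + - gw_prob p t) has_sum (Gx + mu p * xi * M + - Gx)) UNIV"
    by (intro has_sum_add gw_N) (simp add: has_sum_uminus gw_G)
  then have "((\<lambda>t. gw_prob p t * (real (num_edges t) * (\<lambda>_. 1) t)) has_sum (mu p * xi * M)) UNIV"
    by (simp add: ev algebra_simps)
  then have "Eo p (\<lambda>t. real (num_edges t) * (\<lambda>_. 1) t) = mu p * xi * M"
    unfolding Eo_def by (simp add: infsumI)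
  then show ?thesis by (simp add: M_L power2_eq_square algebra_simps)
qed

lemma Eo_A: "Eo p (\<lambda>t. real (num_deg k t) * (\<lambda>_. 1) t) = p k * xi ^ k * (1 + real k * L)"
proof -
  have "Eo p (\<lambda>t. real (num_deg k t) * (\<lambda>_. 1) t) = p k * xi ^ k + mu p * xi * Ck k"
    unfolding Eo_def using gw_A by (simp add: infsumI)
  also have "\<dots> = p k * xi ^ k + real k * p k * xi ^ k * L" by (simp only: muCk)
  also have "\<dots> = p k * xi ^ k * (1 + real k * L)" by (simp add: algebra_simps)
  finally show ?thesis .
qed

lemma xipow_le: "xi ^ k \<le> 1" using xi_nonneg xi_le1 by (simp add: power_le_one)

lemma S2_summable: "summable (\<lambda>k. p k * (xi ^ k)\<^sup>2)"
proof (rule summable_comparison_test'[OF pxi_summable])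
  fix n show "norm (p n * (xi ^ n)\<^sup>2) \<le> p n * xi ^ n"
    using p_nonneg[of n] xi_nonneg xipow_le[of n]
    by (auto simp: power2_eq_square abs_mult intro!: mult_left_mono mult_left_le)
qed

lemma S3_sums: "(\<lambda>k. real k * p k * xi ^ k) sums (mu p * xi^2)"
proof -
  have "(\<lambda>k. real k * p k * xi ^ (k - 1) * xi) sums (mu p * xi * xi)"
    by (intro sums_mult2 Dp_sums)
  moreover have "(\<lambda>k. real k * p k * xi ^ (k - 1) * xi) = (\<lambda>k. real k * p k * xi ^ k)"
    by (rule ext, case_tac k) auto
  ultimately show ?thesis by (simp add: power2_eq_square mult.assoc)
qed

lemma S5a_sums: "(\<lambda>k. real k * (real k - 1) * p k * xi ^ k) sums (mu p * xi^2 * a)"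
proof -
  have "(\<lambda>n. mu p * xi^2 * (real n * qoff p n * xi ^ (n - 1))) sums (mu p * xi^2 * a)"
    unfolding a_def by (intro sums_mult dq_sums xi_nonneg order_refl)
  moreover have "(\<lambda>n. mu p * xi^2 * (real n * qoff p n * xi ^ (n - 1))) = (\<lambda>n. real (Suc n) * (real (Suc n) - 1) * p (Suc n) * xi ^ (Suc n))"
  proof (rule ext)
    fix n show "mu p * xi^2 * (real n * qoff p n * xi ^ (n - 1)) = real (Suc n) * (real (Suc n) - 1) * p (Suc n) * xi ^ (Suc n)"
  proof (cases n)
    case 0 then show ?thesis by simp
  next
    case (Suc n')
    then show ?thesis using mu_pos by (simp add: qoff_def power2_eq_square field_simps)
  qed
  qed
  ultimately have "(\<lambda>n. (\<lambda>k. real k * (real k - 1) * p k * xi ^ k) (Suc n)) sums (mu p * xi^2 * a)"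
    by simp
  then show ?thesis by (subst (asm) sums_Suc_iff) simp
qed

lemma S5_sums: "(\<lambda>k. (real k)\<^sup>2 * p k * xi ^ k) sums (mu p * xi^2 * (1 + a))"
proof -
  have "(\<lambda>k. real k * (real k - 1) * p k * xi ^ k + real k * p k * xi ^ k) sums (mu p * xi^2 * a + mu p * xi^2)"
    by (intro sums_add S5a_sums S3_sums)
  then show ?thesis by (simp add: power2_eq_square algebra_simps)
qed

lemma S4_summable: "summable (\<lambda>k. real k * p k * (xi ^ k)\<^sup>2)"
proof (rule summable_comparison_test'[of "\<lambda>k. real k * p k * xi ^ k"])
  show "summable (\<lambda>k. real k * p k * xi ^ k)" using S3_sums by (simp add: sums_iff)
  fix n show "norm (real n * p n * (xi ^ n)\<^sup>2) \<le> real n * p n * xi ^ n"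
    using p_nonneg[of n] xi_nonneg xipow_le[of n]
    by (auto simp: power2_eq_square abs_mult intro!: mult_left_mono mult_left_le)
qed

lemma S6_summable: "summable (\<lambda>k. (real k)\<^sup>2 * p k * (xi ^ k)\<^sup>2)"
proof (rule summable_comparison_test'[of "\<lambda>k. (real k)\<^sup>2 * p k * xi ^ k"])
  show "summable (\<lambda>k. (real k)\<^sup>2 * p k * xi ^ k)" using S5_sums by (simp add: sums_iff)
  fix n show "norm ((real n)\<^sup>2 * p n * (xi ^ n)\<^sup>2) \<le> (real n)\<^sup>2 * p n * xi ^ n"
    using p_nonneg[of n] xi_nonneg xipow_le[of n]
    by (auto simp: power2_eq_square abs_mult intro!: mult_left_mono mult_left_le)
qed

end

lemma Uf_0: "Uf x (x ^ 0) L (real 0) = 0" unfolding Uf_def by simp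
lemma Uf_1: "Uf x (x ^ 1) L (real 1) = 0" unfolding Uf_def by (simp add: field_simps power2_eq_square)
lemma Uf_2: "Uf x (x ^ 2) L (real 2) = 0" unfolding Uf_def by (simp add: field_simps power2_eq_square)

context gwsup begin

definition S2 where "S2 = (\<Sum>k. p k * (xi ^ k)\<^sup>2)"
definition S4 where "S4 = (\<Sum>k. real k * p k * (xi ^ k)\<^sup>2)"
definition S6 where "S6 = (\<Sum>k. (real k)\<^sup>2 * p k * (xi ^ k)\<^sup>2)"

lemma sig_series: "(\<lambda>k. 1 / p k * (Eo p (\<lambda>t. real (num_deg k t) * (\<lambda>_. 1) t))\<^sup>2) sums (S2 + 2 * L * S4 + L^2 * S6)"
proof -
  have eq: "1 / p k * (Eo p (\<lambda>t. real (num_deg k t) * (\<lambda>_. 1) t))\<^sup>2 =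
      p k * (xi ^ k)\<^sup>2 + 2 * L * (real k * p k * (xi ^ k)\<^sup>2) + L^2 * ((real k)\<^sup>2 * p k * (xi ^ k)\<^sup>2)" for k
  proof (cases "p k = 0")
    case True then show ?thesis by (simp add: Eo_A)
  next
    case False
    then show ?thesis unfolding Eo_A by (simp add: power2_eq_square field_simps)
  qed
  have "(\<lambda>k. p k * (xi ^ k)\<^sup>2 + 2 * L * (real k * p k * (xi ^ k)\<^sup>2) + L^2 * ((real k)\<^sup>2 * p k * (xi ^ k)\<^sup>2)) sums (S2 + 2 * L * S4 + L^2 * S6)"
    unfolding S2_def S4_def S6_def
    by (intro sums_add sums_mult summable_sums S2_summable S4_summable S6_summable)
  then show ?thesis unfolding eq .
qed

lemma sigma_val: "sigma_sq p (\<lambda>_. 1) = Gx + mu p * xi^2 * L + 2 / mu p * (mu p * xi^2 * L)\<^sup>2 - (S2 + 2 * L * S4 + L^2 * S6)"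
proof -
  have "(\<Sum>k. 1 / p k * (Eo p (\<lambda>t. real (num_deg k t) * (\<lambda>_. 1) t))\<^sup>2) = S2 + 2 * L * S4 + L^2 * S6"
    using sig_series by (rule sums_unique[symmetric])
  then show ?thesis unfolding sigma_sq_def using Eo_N Eo_E by simp
qed

lemma U_sums: "(\<lambda>k. p k * Uf xi (xi ^ k) L (real k)) sums
   (Gx - S2 + L * (mu p * xi^2) - 2 * L * S4 + 2 * L^2 * xi^2 * (mu p * xi^2) - L^2 * S6
    - ((2 * L^2 + L + 1 - (3 * L + 1) * xi) / 2) * (mu p * xi^2)
    + ((2 * L^2 + L + 1 - (3 * L + 1) * xi) / 2) * xi^2 * mu p
    + ((1 - xi^2 + 2 * L - 4 * L * xi^2) / 2) * (2 * L - 1) * (mu p * xi^2)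
    - ((1 - xi^2 + 2 * L - 4 * L * xi^2) / 2) * L * (mu p * xi^2 * (1 + a)))"
proof -
  define l1 where "l1 = (2 * L^2 + L + 1 - (3 * L + 1) * xi) / 2"
  define l2 where "l2 = (1 - xi^2 + 2 * L - 4 * L * xi^2) / 2"
  have eq: "p k * Uf xi (xi ^ k) L (real k) =
      p k * xi ^ k - p k * (xi ^ k)\<^sup>2 + L * (real k * p k * xi ^ k) - 2 * L * (real k * p k * (xi ^ k)\<^sup>2)
      + 2 * L^2 * xi^2 * (real k * p k * xi ^ k) - L^2 * ((real k)\<^sup>2 * p k * (xi ^ k)\<^sup>2)
      - l1 * (real k * p k * xi ^ k) + l1 * xi^2 * (real k * p k)
      + l2 * (2 * L - 1) * (real k * p k * xi ^ k) - l2 * L * ((real k)\<^sup>2 * p k * xi ^ k)" for k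
    unfolding Uf_def l1_def l2_def by (simp add: field_simps power2_eq_square)
  have "(\<lambda>k. p k * xi ^ k - p k * (xi ^ k)\<^sup>2 + L * (real k * p k * xi ^ k) - 2 * L * (real k * p k * (xi ^ k)\<^sup>2)
      + 2 * L^2 * xi^2 * (real k * p k * xi ^ k) - L^2 * ((real k)\<^sup>2 * p k * (xi ^ k)\<^sup>2)
      - l1 * (real k * p k * xi ^ k) + l1 * xi^2 * (real k * p k)
      + l2 * (2 * L - 1) * (real k * p k * xi ^ k) - l2 * L * ((real k)\<^sup>2 * p k * xi ^ k)) sums
     (Gx - S2 + L * (mu p * xi^2) - 2 * L * S4 + 2 * L^2 * xi^2 * (mu p * xi^2) - L^2 * S6
    - l1 * (mu p * xi^2) + l1 * xi^2 * mu p + l2 * (2 * L - 1) * (mu p * xi^2) - l2 * L * (mu p * xi^2 * (1 + a)))"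
    unfolding Gx_def S2_def S4_def S6_def
    by (intro sums_add sums_diff sums_mult summable_sums S2_summable S4_summable S6_summable pxi_summable S3_sums S5_sums mu_sums)
  then show ?thesis unfolding eq l1_def l2_def .
qed

lemma sigma_pos: "0 < sigma_sq p (\<lambda>_. 1)"
proof -
  have val: "sigma_sq p (\<lambda>_. 1) = (\<Sum>k. p k * Uf xi (xi ^ k) L (real k))"
  proof -
    have "(\<Sum>k. p k * Uf xi (xi ^ k) L (real k)) =
      (Gx - S2 + L * (mu p * xi^2) - 2 * L * S4 + 2 * L^2 * xi^2 * (mu p * xi^2) - L^2 * S6
    - ((2 * L^2 + L + 1 - (3 * L + 1) * xi) / 2) * (mu p * xi^2)
    + ((2 * L^2 + L + 1 - (3 * L + 1) * xi) / 2) * xi^2 * mu p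
    + ((1 - xi^2 + 2 * L - 4 * L * xi^2) / 2) * (2 * L - 1) * (mu p * xi^2)
    - ((1 - xi^2 + 2 * L - 4 * L * xi^2) / 2) * L * (mu p * xi^2 * (1 + a)))"
      using U_sums by (rule sums_unique[symmetric])
    also have "\<dots> = Gx + mu p * xi^2 * L + 2 / mu p * (mu p * xi^2 * L)\<^sup>2 - (S2 + 2 * L * S4 + L^2 * S6)"
    proof -
      have La: "L * a = L - 1" using L_rel by (simp add: algebra_simps)
      have e1: "((1 - xi^2 + 2 * L - 4 * L * xi^2) / 2) * L * (mu p * xi^2 * (1 + a))
          = ((1 - xi^2 + 2 * L - 4 * L * xi^2) / 2) * (2 * L - 1) * (mu p * xi^2)"
      proof -
        have "L * (1 + a) = 2 * L - 1" using La by (simp add: algebra_simps)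
        moreover have "c * L * (mm * (1 + a)) = c * (L * (1 + a)) * mm" for c mm :: real
          by (simp add: algebra_simps)
        ultimately show ?thesis by simp
      qed
      have e2: "2 / mu p * (mu p * xi^2 * L)\<^sup>2 = 2 * L^2 * xi^2 * (mu p * xi^2)"
        using mu_pos by (simp add: power2_eq_square field_simps)
      show ?thesis unfolding e1 e2 by (simp add: algebra_simps)
    qed
    finally show ?thesis using sigma_val by simp
  qed
  obtain K where K: "3 \<le> K" "p K > 0" using pK by blast
  have x: "0 < xi" "xi < 1" using xi_pos xi_less1 by auto
  have nn: "0 \<le> p k * Uf xi (xi ^ k) L (real k)" for k
  proof (cases "k \<ge> 3")
    case True then show ?thesis using Uf_pos[OF x True L_ge1] p_nonneg[of k] by simp
  next
    case False then have "k = 0 \<or> k = 1 \<or> k = 2" by auto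
    then show ?thesis using Uf_0 Uf_1 Uf_2 by auto
  qed
  have "0 < (\<Sum>k. p k * Uf xi (xi ^ k) L (real k))"
  proof (rule suminf_pos2)
    show "summable (\<lambda>k. p k * Uf xi (xi ^ k) L (real k))" using U_sums by (simp add: sums_iff)
    show "0 \<le> p k * Uf xi (xi ^ k) L (real k)" for k by (rule nn)
    show "0 < p K * Uf xi (xi ^ K) L (real K)" using Uf_pos[OF x K(1) L_ge1] K(2) by simp
  qed
  then show ?thesis using val by simp
qed

end

lemma A5_pK:
  fixes p :: "nat \<Rightarrow> real"
  assumes p_nonneg: "\<And>k. p k \<ge> 0" and p1: "p 1 > 0"
    and A5: "\<not> summable (\<lambda>k. real k * (real k - 2) * p k) \<or> (\<Sum>k. real k * (real k - 2) * p k) > 0"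
  shows "\<exists>K\<ge>3. p K > 0"
proof (rule ccontr)
  assume "\<not> (\<exists>K\<ge>3. p K > 0)"
  note nz = this
  have z: "p K = 0" if "3 \<le> K" for K
  proof -
    have "\<not> 0 < p K" using that nz by blast
    then show ?thesis using p_nonneg[of K] by linarith
  qed
  have eq: "(\<lambda>k. real k * (real k - 2) * p k) = (\<lambda>k. if k = 1 then - p 1 else 0)"
  proof (rule ext)
    fix k show "real k * (real k - 2) * p k = (if k = 1 then - p 1 else 0)"
    proof (cases "k \<ge> 3")
      case True then show ?thesis using z by auto
    next
      case False then have "k = 0 \<or> k = 1 \<or> k = 2" by auto
      then show ?thesis by auto
    qed
  qed
  have "(\<lambda>k. if k = 1 then - p 1 else 0) sums (- p 1)"
    using sums_single[of 1 "\<lambda>_. - p 1"] by simp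
  then have "(\<lambda>k. real k * (real k - 2) * p k) sums (- p 1)" unfolding eq .
  then show False using A5 p1 by (auto simp: sums_iff)
qed

lemma A5_Jdq:
  fixes p :: "nat \<Rightarrow> real"
  assumes p_nonneg: "\<And>k. p k \<ge> 0" and mu_fin: "summable (\<lambda>k. real k * p k)" and mu_pos: "mu p > 0"
    and A5: "\<not> summable (\<lambda>k. real k * (real k - 2) * p k) \<or> (\<Sum>k. real k * (real k - 2) * p k) > 0"
  shows "\<exists>J. 1 < (\<Sum>j<J. real j * qoff p j)"
proof (rule ccontr)
  assume "\<not> (\<exists>J. 1 < (\<Sum>j<J. real j * qoff p j))"
  then have bnd: "(\<Sum>j<J. real j * qoff p j) \<le> 1" for J by (meson not_le)
  define g where "g k = real k * (real k - 1) * p k" for k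
  have gnn: "0 \<le> g k" for k
    unfolding g_def using p_nonneg[of k] by (cases k) auto
  have gS: "g (Suc j) = mu p * (real j * qoff p j)" for j
    unfolding g_def qoff_def using mu_pos by (simp add: field_simps)
  have part: "(\<Sum>k<n. g k) \<le> mu p" for n
  proof (cases n)
    case 0 then show ?thesis using mu_pos by simp
  next
    case (Suc n')
    have "(\<Sum>k<n. g k) = g 0 + (\<Sum>j<n'. g (Suc j))" unfolding Suc by (rule sum.lessThan_Suc_shift)
    also have "\<dots> = mu p * (\<Sum>j<n'. real j * qoff p j)"
    proof -
      have g0: "g 0 = 0" by (simp add: g_def)
      show ?thesis by (simp only: g0 gS sum_distrib_left add_0)
    qed
    also have "\<dots> \<le> mu p * 1" using bnd[of n'] mu_pos by (intro mult_left_mono) auto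
    finally show ?thesis by simp
  qed
  have sg: "summable g"
    by (rule bounded_imp_summable[of g "mu p"]) (use gnn part[of "Suc _"] in \<open>auto simp: lessThan_Suc_atMost\<close>)
  have gle: "suminf g \<le> mu p" by (rule suminf_le_const[OF sg part])
  have "(\<lambda>k. g k - real k * p k) sums (suminf g - mu p)"
    by (intro sums_diff summable_sums sg) (use mu_fin in \<open>simp add: mu_def summable_sums\<close>)
  moreover have "(\<lambda>k. g k - real k * p k) = (\<lambda>k. real k * (real k - 2) * p k)"
    unfolding g_def by (auto simp: fun_eq_iff algebra_simps)
  ultimately have "(\<lambda>k. real k * (real k - 2) * p k) sums (suminf g - mu p)" by simp
  then show False using A5 gle by (auto simp: sums_iff)
qed

theorem lemma10p5:
  fixes d :: "nat \<Rightarrow> nat \<Rightarrow> nat" and p :: "nat \<Rightarrow> real"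
  assumes p_nonneg: "\<And>k. p k \<ge> 0"
    and p_sum: "p sums 1"
    and mu_fin: "summable (\<lambda>k. real k * p k)"
    and mu_pos: "mu p > 0"
    and A1: "\<And>k. (\<lambda>n. real (card {i. i < n \<and> d n i = k}) / real n) \<longlonglongrightarrow> p k"
    and A2: "(\<lambda>n. (\<Sum>i<n. real (d n i)) / real n) \<longlonglongrightarrow> mu p"
    and A5: "\<not> summable (\<lambda>k. real k * (real k - 2) * p k)
             \<or> (\<Sum>k. real k * (real k - 2) * p k) > 0"
    and A6: "p 1 > 0" "p 0 + p 1 < 1"
  shows "sigma_sq p (\<lambda>_. 1) > 0"
proof -
  interpret gwsup p
  proof
    show "\<And>k. p k \<ge> 0" by (rule p_nonneg)
    show "p sums 1" by (rule p_sum)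
    show "summable (\<lambda>k. real k * p k)" by (rule mu_fin)
    show "mu p > 0" by (rule mu_pos)
    show "p 1 > 0" by (rule A6(1))
    show "\<exists>K\<ge>3. p K > 0" by (rule A5_pK[OF p_nonneg A6(1) A5])
    show "\<exists>J. 1 < (\<Sum>j<J. real j * qoff p j)" by (rule A5_Jdq[OF p_nonneg mu_fin mu_pos A5])
  qed
  show ?thesis by (rule sigma_pos)
qed

end
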